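(* Let $p$ be a prime, $n$ a natural number, and $\lambda_1\geq\cdots\geq\lambda_t$ a partition of $n$. Let $U=\mathbb{Z}/p^{\lambda_1}\mathbb{Z}\oplus\cdots\oplus\mathbb{Z}/p^{\lambda_t}\mathbb{Z}$ and let $V$ be the $\mathbb{F}_p[T]/(T^n)$-module $\mathbb{F}_p[T]/(T^{\lambda_1})\oplus\cdots\oplus\mathbb{F}_p[T]/(T^{\lambda_t})$. Then: (1) There is a one-to-one correspondence between isomorphism classes of rings $R$ whose additive group is $U$ and which satisfy $p[R,R]=0$, and isomorphism classes of $\mathbb{F}_p[T]/(T^n)$-algebras $A$ whose underlying module is $V$ and which satisfy $T[A,A]=0$. (2) This correspondence maps isomorphism classes of Lie rings exactly onto isomorphism classes of $\mathbb{F}_p[T]/(T^n)$-Lie algebras; and for corresponding Lie ring $R$ and Lie algebra $A$, $R$ is nilpotent if and only if $A$ is nilpotent.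
   Context: For a commutative ring $C$ with $1$, a $C$-algebra is a unital $C$-module $A$ together with a $C$-bilinear multiplication $[\cdot,\cdot]:A\times A\to A$ (i.e. an element of $\mathrm{Hom}_C(A\otimes_C A,A)$); no associativity or identity element is assumed. A ring means a $\mathbb{Z}$-algebra in this sense. $[R,R]$ denotes the additive subgroup (submodule) generated by all products, so $p[R,R]=0$ means $p\cdot[x,y]=0$ for all $x,y$, and $T[A,A]=0$ means $T\cdot[a,b]=0$ for all $a,b$. A Lie ring (resp. Lie algebra) is such an algebra with $[x,x]=0$ for all $x$ and satisfying the Jacobi identity $[[x,y],z]+[[y,z],x]+[[z,x],y]=0$. Isomorphisms are bijections that are module isomorphisms preserving multiplication. *)

theory Defs
  imports "HOL-Computational_Algebra.Primes"
begin

text \<open>A set Ops of unary maps on G encodes scalar multiplication by the elements of a base ring C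
  (Ops = {} for rings, i.e. Z-algebras, where Z-linearity is just additivity).\<close>

definition biadditive :: "'a set \<Rightarrow> ('a \<Rightarrow> 'a \<Rightarrow> 'a) \<Rightarrow> ('a \<Rightarrow> 'a \<Rightarrow> 'a) \<Rightarrow> bool" where
  "biadditive G add m \<longleftrightarrow>
     (\<forall>x\<in>G. \<forall>y\<in>G. m x y \<in> G) \<and>
     (\<forall>x\<in>G. \<forall>y\<in>G. \<forall>z\<in>G. m (add x y) z = add (m x z) (m y z)
                         \<and> m x (add y z) = add (m x y) (m x z))"

definition ops_compatible :: "'a set \<Rightarrow> ('a \<Rightarrow> 'a) set \<Rightarrow> ('a \<Rightarrow> 'a \<Rightarrow> 'a) \<Rightarrow> bool" where
  "ops_compatible G Ops m \<longleftrightarrow>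
     (\<forall>\<phi>\<in>Ops. \<forall>x\<in>G. \<forall>y\<in>G. m (\<phi> x) y = \<phi> (m x y) \<and> m x (\<phi> y) = \<phi> (m x y))"

fun nsmul :: "('a \<Rightarrow> 'a \<Rightarrow> 'a) \<Rightarrow> 'a \<Rightarrow> nat \<Rightarrow> 'a \<Rightarrow> 'a" where
  "nsmul add zero 0 x = zero"
| "nsmul add zero (Suc k) x = add x (nsmul add zero k x)"

definition is_lie :: "'a set \<Rightarrow> ('a \<Rightarrow> 'a \<Rightarrow> 'a) \<Rightarrow> 'a \<Rightarrow> ('a \<Rightarrow> 'a \<Rightarrow> 'a) \<Rightarrow> bool" where
  "is_lie G add zero m \<longleftrightarrow>
     (\<forall>x\<in>G. m x x = zero) \<and>
     (\<forall>x\<in>G. \<forall>y\<in>G. \<forall>z\<in>G.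
        add (add (m (m x y) z) (m (m y z) x)) (m (m z x) y) = zero)"

definition struct_iso :: "'a set \<Rightarrow> ('a \<Rightarrow> 'a \<Rightarrow> 'a) \<Rightarrow> ('a \<Rightarrow> 'a) set \<Rightarrow>
    ('a \<Rightarrow> 'a \<Rightarrow> 'a) \<Rightarrow> ('a \<Rightarrow> 'a \<Rightarrow> 'a) \<Rightarrow> ('a \<Rightarrow> 'a) \<Rightarrow> bool" where
  "struct_iso G add Ops m1 m2 f \<longleftrightarrow>
     bij_betw f G G \<and>
     (\<forall>x\<in>G. \<forall>y\<in>G. f (add x y) = add (f x) (f y)) \<and>
     (\<forall>\<phi>\<in>Ops. \<forall>x\<in>G. f (\<phi> x) = \<phi> (f x)) \<and>
     (\<forall>x\<in>G. \<forall>y\<in>G. f (m1 x y) = m2 (f x) (f y))"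

definition iso_classes :: "('a \<Rightarrow> 'a \<Rightarrow> 'a) set \<Rightarrow> 'a set \<Rightarrow> ('a \<Rightarrow> 'a \<Rightarrow> 'a) \<Rightarrow>
    ('a \<Rightarrow> 'a) set \<Rightarrow> ('a \<Rightarrow> 'a \<Rightarrow> 'a) set set" where
  "iso_classes S G add Ops = {{m' \<in> S. \<exists>f. struct_iso G add Ops m m' f} | m. m \<in> S}"

inductive_set prod_span :: "'a set \<Rightarrow> ('a \<Rightarrow> 'a \<Rightarrow> 'a) \<Rightarrow> 'a \<Rightarrow> ('a \<Rightarrow> 'a) \<Rightarrow>
    ('a \<Rightarrow> 'a) set \<Rightarrow> ('a \<Rightarrow> 'a \<Rightarrow> 'a) \<Rightarrow> 'a set \<Rightarrow> 'a set"
  for G add zero neg Ops m S where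
  zero: "zero \<in> prod_span G add zero neg Ops m S"
| prod: "x \<in> S \<Longrightarrow> y \<in> G \<Longrightarrow> m x y \<in> prod_span G add zero neg Ops m S"
| add: "a \<in> prod_span G add zero neg Ops m S \<Longrightarrow> b \<in> prod_span G add zero neg Ops m S
        \<Longrightarrow> add a b \<in> prod_span G add zero neg Ops m S"
| neg: "a \<in> prod_span G add zero neg Ops m S \<Longrightarrow> neg a \<in> prod_span G add zero neg Ops m S"
| op: "\<phi> \<in> Ops \<Longrightarrow> a \<in> prod_span G add zero neg Ops m S \<Longrightarrow> \<phi> a \<in> prod_span G add zero neg Ops m S"

text \<open>Lower central series: lcs 0 = A (i.e. gamma_1), lcs (k+1) = [lcs k, A].\<close>
fun lcs :: "'a set \<Rightarrow> ('a \<Rightarrow> 'a \<Rightarrow> 'a) \<Rightarrow> 'a \<Rightarrow> ('a \<Rightarrow> 'a) \<Rightarrow>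
    ('a \<Rightarrow> 'a) set \<Rightarrow> ('a \<Rightarrow> 'a \<Rightarrow> 'a) \<Rightarrow> nat \<Rightarrow> 'a set" where
  "lcs G add zero neg Ops m 0 = G"
| "lcs G add zero neg Ops m (Suc k) = prod_span G add zero neg Ops m (lcs G add zero neg Ops m k)"

definition nilpotent_alg :: "'a set \<Rightarrow> ('a \<Rightarrow> 'a \<Rightarrow> 'a) \<Rightarrow> 'a \<Rightarrow> ('a \<Rightarrow> 'a) \<Rightarrow>
    ('a \<Rightarrow> 'a) set \<Rightarrow> ('a \<Rightarrow> 'a \<Rightarrow> 'a) \<Rightarrow> bool" where
  "nilpotent_alg G add zero neg Ops m \<longleftrightarrow> (\<exists>k. lcs G add zero neg Ops m k = {zero})"

definition is_partition :: "nat list \<Rightarrow> nat \<Rightarrow> bool" where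
  "is_partition lam n \<longleftrightarrow> sorted_wrt (\<ge>) lam \<and> (\<forall>l\<in>set lam. 0 < l) \<and> sum_list lam = n"

definition U_car :: "nat \<Rightarrow> nat list \<Rightarrow> (nat \<Rightarrow> int) set" where
  "U_car p lam = {x. (\<forall>i<length lam. 0 \<le> x i \<and> x i < int p ^ (lam ! i)) \<and>
                     (\<forall>i\<ge>length lam. x i = 0)}"

definition U_add :: "nat \<Rightarrow> nat list \<Rightarrow> (nat \<Rightarrow> int) \<Rightarrow> (nat \<Rightarrow> int) \<Rightarrow> (nat \<Rightarrow> int)" where
  "U_add p lam x y = (\<lambda>i. if i < length lam then (x i + y i) mod (int p ^ (lam ! i)) else 0)"

definition U_neg :: "nat \<Rightarrow> nat list \<Rightarrow> (nat \<Rightarrow> int) \<Rightarrow> (nat \<Rightarrow> int)" where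
  "U_neg p lam x = (\<lambda>i. if i < length lam then (- x i) mod (int p ^ (lam ! i)) else 0)"

definition U_zero :: "nat \<Rightarrow> int" where
  "U_zero = (\<lambda>i. 0)"

text \<open>Elements of C: coefficient sequences c with 0 \<le> c j < p for j < n, 0 otherwise.\<close>
definition C_car :: "nat \<Rightarrow> nat \<Rightarrow> (nat \<Rightarrow> int) set" where
  "C_car p n = {c. (\<forall>j<n. 0 \<le> c j \<and> c j < int p) \<and> (\<forall>j\<ge>n. c j = 0)}"

definition T_el :: "nat \<Rightarrow> nat \<Rightarrow> int" where
  "T_el n = (\<lambda>j. if j = 1 \<and> 1 < n then 1 else 0)"

text \<open>Elements of V: v i j is the coefficient of T^j in the i-th summand.\<close>
definition V_car :: "nat \<Rightarrow> nat list \<Rightarrow> (nat \<Rightarrow> nat \<Rightarrow> int) set" where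
  "V_car p lam = {v. (\<forall>i j. (i < length lam \<and> j < lam ! i) \<longrightarrow> 0 \<le> v i j \<and> v i j < int p) \<and>
                     (\<forall>i j. \<not> (i < length lam \<and> j < lam ! i) \<longrightarrow> v i j = 0)}"

definition V_add :: "nat \<Rightarrow> nat list \<Rightarrow> (nat \<Rightarrow> nat \<Rightarrow> int) \<Rightarrow> (nat \<Rightarrow> nat \<Rightarrow> int) \<Rightarrow> (nat \<Rightarrow> nat \<Rightarrow> int)" where
  "V_add p lam v w = (\<lambda>i j. if i < length lam \<and> j < lam ! i then (v i j + w i j) mod int p else 0)"

definition V_neg :: "nat \<Rightarrow> nat list \<Rightarrow> (nat \<Rightarrow> nat \<Rightarrow> int) \<Rightarrow> (nat \<Rightarrow> nat \<Rightarrow> int)" where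
  "V_neg p lam v = (\<lambda>i j. if i < length lam \<and> j < lam ! i then (- v i j) mod int p else 0)"

definition V_zero :: "nat \<Rightarrow> nat \<Rightarrow> int" where
  "V_zero = (\<lambda>i j. 0)"

definition V_act :: "nat \<Rightarrow> nat list \<Rightarrow> (nat \<Rightarrow> int) \<Rightarrow> (nat \<Rightarrow> nat \<Rightarrow> int) \<Rightarrow> (nat \<Rightarrow> nat \<Rightarrow> int)" where
  "V_act p lam c v = (\<lambda>i j. if i < length lam \<and> j < lam ! i
                             then (\<Sum>k\<in>{0..j}. c k * v i (j - k)) mod int p else 0)"

definition V_ops :: "nat \<Rightarrow> nat \<Rightarrow> nat list \<Rightarrow> ((nat \<Rightarrow> nat \<Rightarrow> int) \<Rightarrow> (nat \<Rightarrow> nat \<Rightarrow> int)) set" where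
  "V_ops p n lam = (\<lambda>c. V_act p lam c) ` C_car p n"

text \<open>Rings (Z-algebras) with additive group U and p[R,R] = 0.\<close>
definition ring_structs :: "nat \<Rightarrow> nat list \<Rightarrow> ((nat \<Rightarrow> int) \<Rightarrow> (nat \<Rightarrow> int) \<Rightarrow> (nat \<Rightarrow> int)) set" where
  "ring_structs p lam = {m. biadditive (U_car p lam) (U_add p lam) m \<and>
      (\<forall>x\<in>U_car p lam. \<forall>y\<in>U_car p lam. nsmul (U_add p lam) U_zero p (m x y) = U_zero)}"

text \<open>C-algebras with underlying module V and T[A,A] = 0.\<close>
definition alg_structs :: "nat \<Rightarrow> nat \<Rightarrow> nat list \<Rightarrow>
    ((nat \<Rightarrow> nat \<Rightarrow> int) \<Rightarrow> (nat \<Rightarrow> nat \<Rightarrow> int) \<Rightarrow> (nat \<Rightarrow> nat \<Rightarrow> int)) set" where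
  "alg_structs p n lam = {m. biadditive (V_car p lam) (V_add p lam) m \<and>
      ops_compatible (V_car p lam) (V_ops p n lam) m \<and>
      (\<forall>x\<in>V_car p lam. \<forall>y\<in>V_car p lam. V_act p lam (T_el n) (m x y) = V_zero)}"

definition ring_classes where
  "ring_classes p lam = iso_classes (ring_structs p lam) (U_car p lam) (U_add p lam) {}"

definition alg_classes where
  "alg_classes p n lam = iso_classes (alg_structs p n lam) (V_car p lam) (V_add p lam) (V_ops p n lam)"

end

theory Submission
  imports Defs "HOL-Computational_Algebra.Formal_Power_Series"
begin

locale PL =
  fixes p n :: nat and lam :: "nat list"
  assumes prime_p: "prime p" and part: "is_partition lam n"
begin

abbreviation "t \<equiv> length lam"
abbreviation "L i \<equiv> lam ! i"
abbreviation "UC \<equiv> U_car p lam"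
abbreviation "addU \<equiv> U_add p lam"
abbreviation "negU \<equiv> U_neg p lam"
abbreviation "VC \<equiv> V_car p lam"
abbreviation "addV \<equiv> V_add p lam"
abbreviation "negV \<equiv> V_neg p lam"
abbreviation "actV \<equiv> V_act p lam"
abbreviation "OpsV \<equiv> V_ops p n lam"
abbreviation "TT \<equiv> T_el n"

lemma p_gt1: "1 < p" using prime_p prime_gt_1_nat by blast
lemma p_int_gt1: "(1::int) < int p" using p_gt1 by simp
lemma p_pos: "(0::int) < int p" using p_gt1 by simp
lemma pow_pos[simp]: "(0::int) < int p ^ k" using p_pos by simp
lemma pow_nz[simp]: "int p ^ k \<noteq> 0" using pow_pos[of k] by linarith

lemma mod_pow_ge[simp]: "0 \<le> a mod (int p ^ k)" using pow_pos[of k] by (rule pos_mod_sign)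
lemma mod_pow_lt[simp]: "a mod (int p ^ k) < int p ^ k" using pow_pos[of k] by (rule pos_mod_bound)
lemma p_pos_nat[simp]: "0 < p" using p_gt1 by simp
lemma p_nz[simp]: "p \<noteq> 0" using p_gt1 by simp
lemma mod_p_ge[simp]: "0 \<le> a mod (int p)" using p_pos by simp
lemma mod_p_lt[simp]: "a mod (int p) < int p" using p_pos by simp

lemma L_pos: "i < t \<Longrightarrow> 0 < L i"
  using part unfolding is_partition_def by (auto dest: nth_mem)

lemma L_le_n: "i < t \<Longrightarrow> L i \<le> n"
proof -
  assume "i < t"
  hence "L i \<in> set lam" by (rule nth_mem)
  hence "L i \<le> sum_list lam" by (rule member_le_sum_list) simp
  thus ?thesis using part unfolding is_partition_def by simp
qed

lemma n_le1: "n \<le> 1 \<Longrightarrow> i < t \<Longrightarrow> L i = 1"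
proof -
  assume a: "n \<le> 1" "i < t"
  have "0 < L i" "L i \<le> n" using L_pos[OF a(2)] L_le_n[OF a(2)] by auto
  thus ?thesis using a(1) by linarith
qed

lemma memU: "x \<in> UC \<longleftrightarrow> (\<forall>i<t. 0 \<le> x i \<and> x i < int p ^ L i) \<and> (\<forall>i\<ge>t. x i = 0)"
  by (simp add: U_car_def)

lemma memV: "v \<in> VC \<longleftrightarrow> (\<forall>i j. (i < t \<and> j < L i) \<longrightarrow> 0 \<le> v i j \<and> v i j < int p) \<and>
                     (\<forall>i j. \<not> (i < t \<and> j < L i) \<longrightarrow> v i j = 0)"
  by (simp add: V_car_def)

lemma addU_apply: "addU x y i = (if i < t then (x i + y i) mod (int p ^ L i) else 0)"
  by (simp add: U_add_def)
lemma negU_apply: "negU x i = (if i < t then (- x i) mod (int p ^ L i) else 0)"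
  by (simp add: U_neg_def)
lemma addV_apply: "addV v w i j = (if i < t \<and> j < L i then (v i j + w i j) mod int p else 0)"
  by (simp add: V_add_def)
lemma negV_apply: "negV v i j = (if i < t \<and> j < L i then (- v i j) mod int p else 0)"
  by (simp add: V_neg_def)

lemma addU_in[simp]: "addU x y \<in> UC"
  by (simp add: memU addU_apply)
lemma negU_in[simp]: "negU x \<in> UC"
  by (simp add: memU negU_apply)
lemma zeroU_in[simp]: "U_zero \<in> UC"
  by (simp add: memU U_zero_def)
lemma addV_in[simp]: "addV x y \<in> VC"
  using p_pos by (simp add: memV addV_apply)
lemma negV_in[simp]: "negV x \<in> VC"
  using p_pos by (simp add: memV negV_apply)
lemma zeroV_in[simp]: "V_zero \<in> VC"
  by (simp add: memV V_zero_def)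

lemma U_eqI: "x \<in> UC \<Longrightarrow> y \<in> UC \<Longrightarrow> (\<And>i. i < t \<Longrightarrow> x i = y i) \<Longrightarrow> x = y"
  by (rule ext) (metis memU not_le)
lemma V_eqI: "x \<in> VC \<Longrightarrow> y \<in> VC \<Longrightarrow> (\<And>i j. i < t \<Longrightarrow> j < L i \<Longrightarrow> x i j = y i j) \<Longrightarrow> x = y"
  by (intro ext) (metis memV)

lemma memU_mod: "x \<in> UC \<Longrightarrow> i < t \<Longrightarrow> x i mod (int p ^ L i) = x i"
  by (simp add: memU)
lemma memV_mod: "x \<in> VC \<Longrightarrow> i < t \<Longrightarrow> j < L i \<Longrightarrow> x i j mod int p = x i j"
  by (simp add: memV)

lemma addU_comm: "addU x y = addU y x"
  by (rule ext) (simp add: addU_apply add.commute)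
lemma addU_assoc: "addU (addU x y) z = addU x (addU y z)"
  by (rule ext) (simp add: addU_apply mod_add_left_eq mod_add_right_eq add.assoc)
lemma addU_zero[simp]: "x \<in> UC \<Longrightarrow> addU x U_zero = x"
  by (rule U_eqI) (auto simp: addU_apply U_zero_def memU_mod)
lemma addU_zero_left[simp]: "x \<in> UC \<Longrightarrow> addU U_zero x = x"
  by (rule U_eqI) (auto simp: addU_apply U_zero_def memU_mod)
lemma addU_neg: "addU x (negU x) = U_zero"
  by (rule ext) (simp add: addU_apply negU_apply U_zero_def mod_add_right_eq)

lemma addV_comm: "addV x y = addV y x"
  by (intro ext) (simp add: addV_apply add.commute)
lemma addV_assoc: "addV (addV x y) z = addV x (addV y z)"
  by (intro ext) (simp add: addV_apply mod_add_left_eq mod_add_right_eq add.assoc)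
lemma addV_zero[simp]: "x \<in> VC \<Longrightarrow> addV x V_zero = x"
  by (rule V_eqI) (auto simp: addV_apply V_zero_def memV_mod)
lemma addV_zero_left[simp]: "x \<in> VC \<Longrightarrow> addV V_zero x = x"
  by (rule V_eqI) (auto simp: addV_apply V_zero_def memV_mod)
lemma addV_neg: "addV x (negV x) = V_zero"
  by (intro ext) (simp add: addV_apply negV_apply V_zero_def mod_add_right_eq)

lemma negU_unique: assumes "b \<in> UC" "addU a b = U_zero" shows "b = negU a"
proof (rule U_eqI)
  fix i assume i: "i < t"
  have "(a i + b i) mod (int p ^ L i) = 0" using assms(2) i
    by (metis U_zero_def addU_apply)
  hence "b i mod (int p ^ L i) = (- a i) mod (int p ^ L i)"
    by (metis add.commute add_diff_cancel_left' diff_0 mod_diff_left_eq)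
  thus "b i = negU a i" using assms(1) i by (simp add: memU_mod negU_apply)
qed (use assms in auto)

lemma negV_unique: assumes "b \<in> VC" "addV a b = V_zero" shows "b = negV a"
proof (rule V_eqI)
  fix i j assume i: "i < t" "j < L i"
  have "(a i j + b i j) mod int p = 0" using assms(2) i
    by (metis V_zero_def addV_apply)
  hence "b i j mod int p = (- a i j) mod int p"
    by (metis add.commute add_diff_cancel_left' diff_0 mod_diff_left_eq)
  thus "b i j = negV a i j" using assms(1) i by (simp add: memV_mod negV_apply)
qed (use assms in auto)

lemma nsmulU: "x \<in> UC \<Longrightarrow> nsmul addU U_zero k x = (\<lambda>i. if i < t then (int k * x i) mod (int p ^ L i) else 0)"
proof (induction k)
  case 0 thus ?case by (simp add: U_zero_def fun_eq_iff)
next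
  case (Suc k)
  show ?case using Suc by (auto simp: addU_apply mod_add_right_eq algebra_simps)
qed

lemma nsmulV: "x \<in> VC \<Longrightarrow> nsmul addV V_zero k x = (\<lambda>i j. if i < t \<and> j < L i then (int k * x i j) mod int p else 0)"
proof (induction k)
  case 0 thus ?case by (simp add: V_zero_def fun_eq_iff)
next
  case (Suc k)
  show ?case using Suc by (simp add: fun_eq_iff addV_apply mod_add_right_eq algebra_simps)
qed

lemma nsmulU_in: "x \<in> UC \<Longrightarrow> nsmul addU U_zero k x \<in> UC"
  by (simp add: nsmulU memU)

definition homU :: "((nat \<Rightarrow> int) \<Rightarrow> (nat \<Rightarrow> int)) \<Rightarrow> bool" where
  "homU h \<longleftrightarrow> (\<forall>x\<in>UC. h x \<in> UC) \<and> (\<forall>x\<in>UC. \<forall>y\<in>UC. h (addU x y) = addU (h x) (h y))"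

definition homV :: "((nat \<Rightarrow> nat \<Rightarrow> int) \<Rightarrow> (nat \<Rightarrow> nat \<Rightarrow> int)) \<Rightarrow> bool" where
  "homV h \<longleftrightarrow> (\<forall>x\<in>VC. h x \<in> VC) \<and> (\<forall>x\<in>VC. \<forall>y\<in>VC. h (addV x y) = addV (h x) (h y))"

lemma homU_zero: assumes "homU h" shows "h U_zero = U_zero"
proof -
  have z: "h U_zero \<in> UC" using assms by (simp add: homU_def)
  have "addU (h U_zero) (h U_zero) = h U_zero" using assms
    by (metis addU_zero homU_def zeroU_in)
  hence "addU (negU (h U_zero)) (addU (h U_zero) (h U_zero)) = addU (negU (h U_zero)) (h U_zero)" by simp
  thus ?thesis using z by (metis addU_assoc addU_comm addU_neg addU_zero_left)
qed

lemma homV_zero: assumes "homV h" shows "h V_zero = V_zero"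
proof -
  have z: "h V_zero \<in> VC" using assms by (simp add: homV_def)
  have "addV (h V_zero) (h V_zero) = h V_zero" using assms
    by (metis addV_zero homV_def zeroV_in)
  hence "addV (negV (h V_zero)) (addV (h V_zero) (h V_zero)) = addV (negV (h V_zero)) (h V_zero)" by simp
  thus ?thesis using z by (metis addV_assoc addV_comm addV_neg addV_zero_left)
qed

lemma homU_neg: assumes "homU h" "x \<in> UC" shows "h (negU x) = negU (h x)"
proof -
  have "addU (h x) (h (negU x)) = h (addU x (negU x))" using assms by (simp add: homU_def)
  also have "\<dots> = U_zero" using homU_zero[OF assms(1)] by (simp add: addU_neg)
  finally show ?thesis using assms by (intro negU_unique) (auto simp: homU_def)
qed

lemma homV_neg: assumes "homV h" "x \<in> VC" shows "h (negV x) = negV (h x)"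
proof -
  have "addV (h x) (h (negV x)) = h (addV x (negV x))" using assms by (simp add: homV_def)
  also have "\<dots> = V_zero" using homV_zero[OF assms(1)] by (simp add: addV_neg)
  finally show ?thesis using assms by (intro negV_unique) (auto simp: homV_def)
qed

lemma homU_nsmul: assumes "homU h" "x \<in> UC"
  shows "h (nsmul addU U_zero k x) = nsmul addU U_zero k (h x)"
proof (induction k)
  case 0 thus ?case using homU_zero[OF assms(1)] by simp
next
  case (Suc k)
  have "nsmul addU U_zero k x \<in> UC" using assms(2) by (rule nsmulU_in)
  thus ?case using Suc assms by (simp add: homU_def)
qed


lemma actV_apply: "actV c v i j = (if i < t \<and> j < L i then (\<Sum>k=0..j. c k * v i (j - k)) mod int p else 0)"
  by (simp add: V_act_def)

lemma actV_in[simp]: "actV c v \<in> VC"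
  by (simp add: memV actV_apply)

lemma TT_in_C: "TT \<in> C_car p n"
  using p_gt1 by (auto simp: C_car_def T_el_def)

lemma TT_in_Ops: "actV TT \<in> OpsV"
  using TT_in_C by (simp add: V_ops_def)

lemma TT_le1: "n \<le> 1 \<Longrightarrow> TT = (\<lambda>_. 0)"
  by (auto simp: T_el_def fun_eq_iff)

lemma actV_zero_scalar: "actV (\<lambda>_. 0) v = V_zero"
  by (simp add: V_act_def V_zero_def fun_eq_iff)

lemma actV_TT: assumes "1 < n"
  shows "actV TT v i j = (if i < t \<and> j < L i then (if 0 < j then v i (j - 1) mod int p else 0) else 0)"
proof -
  have "(\<Sum>k=0..j. TT k * v i (j - k)) = (\<Sum>k\<in>{0..j}. if k = 1 then v i (j - 1) else 0)"
    using assms by (intro sum.cong) (auto simp: T_el_def)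
  also have "\<dots> = (if 0 < j then v i (j - 1) else 0)"
    by (subst sum.delta) auto
  finally show ?thesis by (simp add: actV_apply)
qed

definition socU where "socU = {x \<in> UC. \<forall>i<t. int p ^ (L i - 1) dvd x i}"
definition socV where "socV = {v \<in> VC. \<forall>i<t. \<forall>j. j + 1 < L i \<longrightarrow> v i j = 0}"

lemma socU_sub: "socU \<subseteq> UC" by (auto simp: socU_def)
lemma socV_sub: "socV \<subseteq> VC" by (auto simp: socV_def)

lemma T_kill_soc: assumes "v \<in> VC" "actV TT v = V_zero" shows "v \<in> socV"
proof (cases "1 < n")
  case True
  hence n1: "1 < n" .
  { fix i j assume ij: "i < t" "j + 1 < L i"
    have "actV TT v i (j+1) = 0" using assms(2) by (simp add: V_zero_def)
    hence "v i j mod int p = 0" using ij n1 by (simp add: actV_TT)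
    hence "v i j = 0" using assms(1) ij by (simp add: memV_mod) }
  thus ?thesis using assms(1) by (auto simp: socV_def)
next
  case False
  thus ?thesis using assms(1) n_le1 by (auto simp: socV_def)
qed

lemma soc_act: assumes "v \<in> socV"
  shows "actV c v = (\<lambda>i j. if i < t \<and> j + 1 = L i then (c 0 * v i j) mod int p else 0)"
proof (intro ext)
  fix i j
  show "actV c v i j = (if i < t \<and> j + 1 = L i then (c 0 * v i j) mod int p else 0)"
  proof (cases "i < t \<and> j < L i")
    case True
    have "(\<Sum>k=0..j. c k * v i (j - k)) = (\<Sum>k\<in>{0..j}. if k = 0 then (if j + 1 = L i then c 0 * v i j else 0) else 0)"
    proof (rule sum.cong)
      fix k assume k: "k \<in> {0..j}"
      show "c k * v i (j - k) = (if k = 0 then (if j + 1 = L i then c 0 * v i j else 0) else 0)"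
      proof (cases "k = 0")
        case True thus ?thesis using assms \<open>i < t \<and> j < L i\<close> by (auto simp: socV_def)
      next
        case False
        hence "j - k + 1 < L i" using k True by auto
        thus ?thesis using assms True False by (auto simp: socV_def)
      qed
    qed simp
    also have "\<dots> = (if j + 1 = L i then c 0 * v i j else 0)" by (subst sum.delta) auto
    finally show ?thesis using True by (auto simp: actV_apply)
  next
    case False thus ?thesis by (auto simp: actV_apply)
  qed
qed

lemma soc_T_kill: "v \<in> socV \<Longrightarrow> actV TT v = V_zero"
  by (simp add: soc_act T_el_def V_zero_def fun_eq_iff)

lemma soc_act0: "v \<in> socV \<Longrightarrow> j + 1 < L i \<Longrightarrow> actV c v i j = 0"
  by (simp add: soc_act)

lemma socV_act: "v \<in> socV \<Longrightarrow> actV c v \<in> socV"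
  using soc_act0 unfolding socV_def by auto

lemma socV_add: "v \<in> socV \<Longrightarrow> w \<in> socV \<Longrightarrow> addV v w \<in> socV"
  by (auto simp: socV_def addV_apply)
lemma socV_neg: "v \<in> socV \<Longrightarrow> negV v \<in> socV"
  by (auto simp: socV_def negV_apply)
lemma socV_zero: "V_zero \<in> socV"
proof -
  have "V_zero \<in> VC" by simp
  thus ?thesis by (auto simp: socV_def V_zero_def)
qed

lemma pow_L_split: "i < t \<Longrightarrow> int p ^ L i = int p * int p ^ (L i - 1)"
  using L_pos by (metis Suc_diff_1 power_Suc)

lemma socU_nsmul_iff: assumes "x \<in> UC"
  shows "nsmul addU U_zero p x = U_zero \<longleftrightarrow> x \<in> socU"
proof -
  have "(int p * x i) mod (int p ^ L i) = 0 \<longleftrightarrow> int p ^ (L i - 1) dvd x i" if "i < t" for i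
    using pow_L_split[OF that] p_pos by (auto simp: mod_eq_0_iff_dvd)
  moreover have "nsmul addU U_zero p x = (\<lambda>i. if i<t then (int p * x i) mod (int p ^ L i) else 0)"
    by (rule nsmulU[OF assms])
  moreover have "(\<lambda>i. if i<t then (int p * x i) mod (int p ^ L i) else 0) = U_zero \<longleftrightarrow>
     (\<forall>i<t. (int p * x i) mod (int p ^ L i) = 0)"
    by (auto simp: U_zero_def fun_eq_iff)
  ultimately show ?thesis using assms by (auto simp: socU_def)
qed

lemma socU_add: "x \<in> socU \<Longrightarrow> y \<in> socU \<Longrightarrow> addU x y \<in> socU"
proof -
  assume a: "x \<in> socU" "y \<in> socU"
  { fix i assume i: "i < t"
    have "int p ^ (L i - 1) dvd (x i + y i)" using a i by (auto simp: socU_def)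
    moreover have "int p ^ (L i - 1) dvd int p ^ L i" using pow_L_split[OF i] by simp
    ultimately have "int p ^ (L i - 1) dvd (x i + y i) mod (int p ^ L i)"
      using dvd_mod by blast }
  thus ?thesis by (auto simp: socU_def addU_apply)
qed

lemma socU_neg: "x \<in> socU \<Longrightarrow> negU x \<in> socU"
proof -
  assume a: "x \<in> socU"
  { fix i assume i: "i < t"
    have "int p ^ (L i - 1) dvd (- x i)" using a i by (auto simp: socU_def)
    moreover have "int p ^ (L i - 1) dvd int p ^ L i" using pow_L_split[OF i] by simp
    ultimately have "int p ^ (L i - 1) dvd (- x i) mod (int p ^ L i)"
      using dvd_mod by blast }
  thus ?thesis by (auto simp: socU_def negU_apply)
qed

lemma socU_zero: "U_zero \<in> socU"
proof -
  have "U_zero \<in> UC" by simp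
  thus ?thesis by (auto simp: socU_def U_zero_def)
qed

lemma socU_nsmul: "x \<in> socU \<Longrightarrow> nsmul addU U_zero k x \<in> socU"
  by (induction k) (auto simp: socU_zero socU_add)

definition dlt :: "(nat \<Rightarrow> int) \<Rightarrow> (nat \<Rightarrow> nat \<Rightarrow> int)" where
  "dlt x = (\<lambda>i j. if i < t \<and> j < L i then (x i div int p ^ j) mod int p else 0)"
definition dlt' :: "(nat \<Rightarrow> nat \<Rightarrow> int) \<Rightarrow> (nat \<Rightarrow> int)" where
  "dlt' v = (\<lambda>i. if i < t then (\<Sum>j<L i. v i j * int p ^ j) else 0)"

lemma dlt_in[simp]: "dlt x \<in> VC"
  by (simp add: memV dlt_def)

lemma digsum_bound: "(\<And>j. j < k \<Longrightarrow> 0 \<le> d j \<and> d j < int p) \<Longrightarrow>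
   0 \<le> (\<Sum>j<k. d j * int p ^ j) \<and> (\<Sum>j<k. d j * int p ^ j) < int p ^ k"
proof (induction k)
  case 0 thus ?case by simp
next
  case (Suc k)
  have IH: "0 \<le> (\<Sum>j<k. d j * int p ^ j)" "(\<Sum>j<k. d j * int p ^ j) < int p ^ k" using Suc by auto
  have dk: "0 \<le> d k" "d k \<le> int p - 1" using Suc.prems[of k] by auto
  have "d k * int p ^ k \<le> (int p - 1) * int p ^ k" using dk by (intro mult_right_mono) auto
  hence "(\<Sum>j<k. d j * int p ^ j) + d k * int p ^ k < int p ^ k + (int p - 1) * int p ^ k"
    using IH by linarith
  also have "\<dots> = int p ^ Suc k" by (simp add: algebra_simps)
  finally show ?case using IH dk by simp
qed

lemma dlt'_in[simp]: "v \<in> VC \<Longrightarrow> dlt' v \<in> UC"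
  using digsum_bound[of "L _" "v _"] by (auto simp: memU memV dlt'_def)

lemma digsum_mod: "(\<Sum>j<k. (a div int p ^ j) mod int p * int p ^ j) = a mod int p ^ k"
proof (induction k)
  case 0 thus ?case by simp
next
  case (Suc k)
  have "a mod (int p ^ k * int p) = int p ^ k * (a div int p ^ k mod int p) + a mod int p ^ k"
    by (rule zmod_zmult2_eq) simp
  thus ?case using Suc by (simp add: algebra_simps)
qed

lemma dlt'_dlt[simp]: assumes "x \<in> UC" shows "dlt' (dlt x) = x"
proof -
  have "dlt' (dlt x) \<in> UC" by (rule dlt'_in) (rule dlt_in)
  thus ?thesis using assms by (rule U_eqI) (auto simp: dlt'_def dlt_def digsum_mod memU_mod[OF assms])
qed

lemma digsum_digit: "(\<And>j. j < k \<Longrightarrow> 0 \<le> d j \<and> d j < int p) \<Longrightarrow> l < k \<Longrightarrow>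
   ((\<Sum>j<k. d j * int p ^ j) div int p ^ l) mod int p = d l"
proof (induction k)
  case 0 thus ?case by simp
next
  case (Suc k)
  have b: "0 \<le> (\<Sum>j<k. d j * int p ^ j)" "(\<Sum>j<k. d j * int p ^ j) < int p ^ k"
    using digsum_bound[of k d] Suc.prems by auto
  show ?case
  proof (cases "l < k")
    case True
    have "int p ^ k = int p ^ l * int p ^ (k - l)" using True by (simp add: power_add[symmetric])
    hence e: "d k * int p ^ k = (d k * int p ^ (k - l)) * int p ^ l" by simp
    have "(\<Sum>j<Suc k. d j * int p ^ j) = (\<Sum>j<k. d j * int p ^ j) + (d k * int p ^ (k - l)) * int p ^ l"
      using e by simp
    hence "((\<Sum>j<Suc k. d j * int p ^ j) div int p ^ l) = (\<Sum>j<k. d j * int p ^ j) div int p ^ l + d k * int p ^ (k - l)"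
      by (simp only: div_mult_self1[OF pow_nz])
    moreover have "int p dvd int p ^ (k - l)" using True by simp
    ultimately have "((\<Sum>j<Suc k. d j * int p ^ j) div int p ^ l) mod int p = ((\<Sum>j<k. d j * int p ^ j) div int p ^ l) mod int p"
      by (simp add: mod_add_right_eq[symmetric])
    thus ?thesis using Suc True by simp
  next
    case False
    hence l: "l = k" using Suc.prems by simp
    have "((\<Sum>j<Suc k. d j * int p ^ j) div int p ^ k) = d k"
      using b by (simp add: div_add1_eq div_pos_pos_trivial)
    thus ?thesis using l Suc.prems(1)[of k] by simp
  qed
qed

lemma dlt_dlt'[simp]: "v \<in> VC \<Longrightarrow> dlt (dlt' v) = v"
proof (rule V_eqI)
  fix i j assume ij: "i < t" "j < L i" and v: "v \<in> VC"
  have "((\<Sum>k<L i. v i k * int p ^ k) div int p ^ j) mod int p = v i j"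
    using v ij by (intro digsum_digit) (auto simp: memV)
  thus "dlt (dlt' v) i j = v i j" using ij by (simp add: dlt_def dlt'_def)
qed auto

lemma dlt_0: "i < t \<Longrightarrow> dlt x i 0 = x i mod int p"
  using L_pos by (simp add: dlt_def)

lemma dlt'_mod: assumes "v \<in> VC" "i < t" shows "dlt' v i mod int p = v i 0"
proof -
  have "dlt (dlt' v) i 0 = v i 0" using assms by simp
  thus ?thesis using dlt_0[OF assms(2)] by simp
qed

lemma dlt_zero: "dlt U_zero = V_zero" by (simp add: dlt_def U_zero_def V_zero_def fun_eq_iff)
lemma dlt'_zero: "dlt' V_zero = U_zero" by (simp add: dlt'_def U_zero_def V_zero_def fun_eq_iff)

lemma dlt_inj: "x \<in> UC \<Longrightarrow> y \<in> UC \<Longrightarrow> dlt x = dlt y \<Longrightarrow> x = y"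
  by (metis dlt'_dlt)
lemma dlt'_inj: "x \<in> VC \<Longrightarrow> y \<in> VC \<Longrightarrow> dlt' x = dlt' y \<Longrightarrow> x = y"
  by (metis dlt_dlt')

lemma dlt'_soc_val: assumes "v \<in> socV" "i < t"
  shows "dlt' v i = v i (L i - 1) * int p ^ (L i - 1)"
proof -
  have "(\<Sum>j<L i. v i j * int p ^ j) = (\<Sum>j\<in>{..<L i}. if j = L i - 1 then v i (L i - 1) * int p ^ (L i - 1) else 0)"
    by (rule sum.cong) (use assms in \<open>auto simp: socV_def\<close>)
  also have "\<dots> = v i (L i - 1) * int p ^ (L i - 1)"
    using L_pos[OF assms(2)] by (subst sum.delta) auto
  finally show ?thesis using assms by (simp add: dlt'_def)
qed

lemma dlt'_soc: "v \<in> socV \<Longrightarrow> dlt' v \<in> socU"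
  using socV_sub by (auto simp: socU_def dlt'_soc_val)

lemma dlt_soc: assumes "x \<in> socU" shows "dlt x \<in> socV"
proof -
  { fix i j assume ij: "i < t" "j + 1 < L i"
    obtain q where q: "x i = int p ^ (L i - 1) * q" using assms ij by (auto simp: socU_def)
    have "int p ^ (L i - 1) = int p ^ j * int p ^ (L i - 1 - j)" using ij by (simp add: power_add[symmetric])
    hence "x i div int p ^ j = int p ^ (L i - 1 - j) * q" using q by simp
    moreover have "int p dvd int p ^ (L i - 1 - j)" using ij by simp
    ultimately have "(x i div int p ^ j) mod int p = 0" by simp
    hence "dlt x i j = 0" using ij by (simp add: dlt_def) }
  thus ?thesis by (auto simp: socV_def)
qed

lemma dlt'_add_soc: assumes "v \<in> socV" "w \<in> socV"
  shows "dlt' (addV v w) = addU (dlt' v) (dlt' w)"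
proof (rule U_eqI)
  fix i assume i: "i < t"
  have vw: "addV v w \<in> socV" using assms by (rule socV_add)
  have Li: "L i - 1 < L i" using L_pos[OF i] by simp
  have "dlt' (addV v w) i = ((v i (L i - 1) + w i (L i - 1)) mod int p) * int p ^ (L i - 1)"
    using dlt'_soc_val[OF vw i] i Li by (simp add: addV_apply)
  also have "\<dots> = ((v i (L i - 1) + w i (L i - 1)) * int p ^ (L i - 1)) mod (int p * int p ^ (L i - 1))"
    by (simp add: mod_mult_mult2)
  also have "\<dots> = addU (dlt' v) (dlt' w) i"
    using dlt'_soc_val[OF assms(1) i] dlt'_soc_val[OF assms(2) i] i pow_L_split[OF i]
    by (simp add: addU_apply algebra_simps)
  finally show "dlt' (addV v w) i = addU (dlt' v) (dlt' w) i" .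
qed (use assms socV_sub in auto)

lemma dlt'_neg_soc: assumes "v \<in> socV"
  shows "dlt' (negV v) = negU (dlt' v)"
proof (rule U_eqI)
  fix i assume i: "i < t"
  have vw: "negV v \<in> socV" using assms by (rule socV_neg)
  have Li: "L i - 1 < L i" using L_pos[OF i] by simp
  have "dlt' (negV v) i = ((- v i (L i - 1)) mod int p) * int p ^ (L i - 1)"
    using dlt'_soc_val[OF vw i] i Li by (simp add: negV_apply)
  also have "\<dots> = ((- v i (L i - 1)) * int p ^ (L i - 1)) mod (int p * int p ^ (L i - 1))"
    by (rule mod_mult_mult2[symmetric])
  also have "\<dots> = negU (dlt' v) i"
    using dlt'_soc_val[OF assms(1) i] i pow_L_split[OF i]
    by (simp add: negU_apply algebra_simps)
  finally show "dlt' (negV v) i = negU (dlt' v) i" .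
qed (use assms socV_sub in auto)

lemma C_nonneg0: "c \<in> C_car p n \<Longrightarrow> 0 \<le> c 0"
  by (cases "n = 0") (auto simp: C_car_def)

lemma dlt'_act_soc: assumes "v \<in> socV" "c \<in> C_car p n"
  shows "dlt' (actV c v) = nsmul addU U_zero (nat (c 0)) (dlt' v)"
proof (rule U_eqI)
  fix i assume i: "i < t"
  have vw: "actV c v \<in> socV" using assms by (intro socV_act)
  have Li: "L i - 1 < L i" "L i - 1 + 1 = L i" using L_pos[OF i] by auto
  have c0: "int (nat (c 0)) = c 0" using C_nonneg0[OF assms(2)] by simp
  have "dlt' (actV c v) i = ((c 0 * v i (L i - 1)) mod int p) * int p ^ (L i - 1)"
    using dlt'_soc_val[OF vw i] i Li by (simp add: soc_act[OF assms(1)])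
  also have "\<dots> = ((c 0 * v i (L i - 1)) * int p ^ (L i - 1)) mod (int p * int p ^ (L i - 1))"
    by (simp add: mod_mult_mult2)
  also have "\<dots> = nsmul addU U_zero (nat (c 0)) (dlt' v) i"
    using dlt'_soc_val[OF assms(1) i] i pow_L_split[OF i] assms(1) socV_sub c0
    by (subst nsmulU) (auto simp: algebra_simps)
  finally show "dlt' (actV c v) i = nsmul addU U_zero (nat (c 0)) (dlt' v) i" .
qed (use assms socV_sub nsmulU_in in auto)

lemma dlt_add_soc: assumes "x \<in> socU" "y \<in> socU"
  shows "dlt (addU x y) = addV (dlt x) (dlt y)"
proof -
  have xy: "x \<in> UC" "y \<in> UC" using assms socU_sub by auto
  have "dlt' (addV (dlt x) (dlt y)) = addU x y"
    using xy dlt'_add_soc[OF dlt_soc[OF assms(1)] dlt_soc[OF assms(2)]] assms socU_sub by auto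
  hence "dlt (dlt' (addV (dlt x) (dlt y))) = dlt (addU x y)" by simp
  thus ?thesis by simp
qed

lemma dlt_neg_soc: assumes "x \<in> socU"
  shows "dlt (negU x) = negV (dlt x)"
proof -
  have xy: "x \<in> UC" using assms socU_sub by auto
  have "dlt' (negV (dlt x)) = negU x"
    using xy dlt'_neg_soc[OF dlt_soc[OF assms(1)]] assms socU_sub by auto
  hence "dlt (dlt' (negV (dlt x))) = dlt (negU x)" by simp
  thus ?thesis by simp
qed

lemma dlt_nsmul_soc: assumes "x \<in> socU" "c \<in> C_car p n"
  shows "dlt (nsmul addU U_zero (nat (c 0)) x) = actV c (dlt x)"
proof -
  have xy: "x \<in> UC" using assms socU_sub by auto
  have "dlt' (actV c (dlt x)) = nsmul addU U_zero (nat (c 0)) x"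
    using xy dlt'_act_soc[OF dlt_soc[OF assms(1)] assms(2)] assms socU_sub by auto
  hence "dlt (dlt' (actV c (dlt x))) = dlt (nsmul addU U_zero (nat (c 0)) x)" by simp
  thus ?thesis by simp
qed

end


lemma span_closed:
  assumes "zero \<in> P" "\<And>a b. a \<in> P \<Longrightarrow> b \<in> P \<Longrightarrow> add a b \<in> P" "\<And>a. a \<in> P \<Longrightarrow> neg a \<in> P"
    "\<And>\<phi> a. \<phi> \<in> Ops \<Longrightarrow> a \<in> P \<Longrightarrow> \<phi> a \<in> P" "\<And>x y. x \<in> S \<Longrightarrow> y \<in> G \<Longrightarrow> m x y \<in> P"
  shows "prod_span G add zero neg Ops m S \<subseteq> P"
proof
  fix a assume "a \<in> prod_span G add zero neg Ops m S"
  thus "a \<in> P"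
  proof (induction rule: prod_span.induct)
    case zero show ?case by (rule assms(1))
  next
    case (prod x y) thus ?case by (rule assms(5))
  next
    case (add a b) from add.IH show ?case by (rule assms(2))
  next
    case (neg a) from neg.IH show ?case by (rule assms(3))
  next
    case (op \<phi> a) from op.hyps(1) op.IH show ?case by (rule assms(4))
  qed
qed

lemma nsmul_span: "z \<in> prod_span G add zero neg Ops m S \<Longrightarrow> nsmul add zero k z \<in> prod_span G add zero neg Ops m S"
  by (induction k) (auto intro: prod_span.intros)

lemma span_transfer:
  assumes P: "zero1 \<in> P" "\<And>a b. a \<in> P \<Longrightarrow> b \<in> P \<Longrightarrow> add1 a b \<in> P" "\<And>a. a \<in> P \<Longrightarrow> neg1 a \<in> P"
    "\<And>\<phi> a. \<phi> \<in> Ops1 \<Longrightarrow> a \<in> P \<Longrightarrow> \<phi> a \<in> P" "\<And>x y. x \<in> S \<Longrightarrow> y \<in> G1 \<Longrightarrow> m1 x y \<in> P"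
  and h0: "h zero1 = zero2"
  and hadd: "\<And>a b. a \<in> P \<Longrightarrow> b \<in> P \<Longrightarrow> h (add1 a b) = add2 (h a) (h b)"
  and hneg: "\<And>a. a \<in> P \<Longrightarrow> h (neg1 a) = neg2 (h a)"
  and hops: "\<And>\<phi> a. \<phi> \<in> Ops1 \<Longrightarrow> a \<in> P \<Longrightarrow> h a \<in> prod_span G2 add2 zero2 neg2 Ops2 m2 (h ` S) \<Longrightarrow>
                h (\<phi> a) \<in> prod_span G2 add2 zero2 neg2 Ops2 m2 (h ` S)"
  and hm: "\<And>x y. x \<in> S \<Longrightarrow> y \<in> G1 \<Longrightarrow> h (m1 x y) = m2 (h x) (h y)"
  and hG: "\<And>y. y \<in> G1 \<Longrightarrow> h y \<in> G2"
  shows "h ` prod_span G1 add1 zero1 neg1 Ops1 m1 S \<subseteq> prod_span G2 add2 zero2 neg2 Ops2 m2 (h ` S)"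
proof
  fix b assume "b \<in> h ` prod_span G1 add1 zero1 neg1 Ops1 m1 S"
  then obtain a where a: "a \<in> prod_span G1 add1 zero1 neg1 Ops1 m1 S" "b = h a" by blast
  from a(1) have "a \<in> P \<and> h a \<in> prod_span G2 add2 zero2 neg2 Ops2 m2 (h ` S)"
  proof (induction rule: prod_span.induct)
    case zero thus ?case using P(1) h0 prod_span.zero by metis
  next
    case (prod x y)
    have "m1 x y \<in> P" using P(5) prod by blast
    moreover have "h (m1 x y) = m2 (h x) (h y)" using hm prod by blast
    moreover have "m2 (h x) (h y) \<in> prod_span G2 add2 zero2 neg2 Ops2 m2 (h ` S)"
      using prod hG by (intro prod_span.prod) auto
    ultimately show ?case by simp
  next
    case (add a b)
    have "add1 a b \<in> P" using P(2) add by blast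
    moreover have "h (add1 a b) = add2 (h a) (h b)" using hadd add by blast
    moreover have "add2 (h a) (h b) \<in> prod_span G2 add2 zero2 neg2 Ops2 m2 (h ` S)"
      using add by (intro prod_span.add) auto
    ultimately show ?case by simp
  next
    case (neg a)
    have "neg1 a \<in> P" using P(3) neg by blast
    moreover have "h (neg1 a) = neg2 (h a)" using hneg neg by blast
    moreover have "neg2 (h a) \<in> prod_span G2 add2 zero2 neg2 Ops2 m2 (h ` S)"
      using neg by (intro prod_span.neg) auto
    ultimately show ?case by simp
  next
    case (op \<phi> a)
    have "\<phi> a \<in> P" using P(4) op by blast
    moreover have "h (\<phi> a) \<in> prod_span G2 add2 zero2 neg2 Ops2 m2 (h ` S)" using hops op by blast
    ultimately show ?case by simp
  qed
  thus "b \<in> prod_span G2 add2 zero2 neg2 Ops2 m2 (h ` S)" using a by simp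
qed

lemma lcs_image:
  assumes T1: "\<And>S. S \<subseteq> G1 \<Longrightarrow> h ` prod_span G1 add1 zero1 neg1 Ops1 m1 S \<subseteq> prod_span G2 add2 zero2 neg2 Ops2 m2 (h ` S)"
  and T2: "\<And>S. S \<subseteq> G2 \<Longrightarrow> h' ` prod_span G2 add2 zero2 neg2 Ops2 m2 S \<subseteq> prod_span G1 add1 zero1 neg1 Ops1 m1 (h' ` S)"
  and C1: "\<And>S. S \<subseteq> G1 \<Longrightarrow> prod_span G1 add1 zero1 neg1 Ops1 m1 S \<subseteq> G1"
  and C2: "\<And>S. S \<subseteq> G2 \<Longrightarrow> prod_span G2 add2 zero2 neg2 Ops2 m2 S \<subseteq> G2"
  and inv1: "\<And>x. x \<in> G1 \<Longrightarrow> h' (h x) = x" and inv2: "\<And>y. y \<in> G2 \<Longrightarrow> h (h' y) = y"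
  and img: "h ` G1 = G2"
  shows "lcs G2 add2 zero2 neg2 Ops2 m2 k = h ` lcs G1 add1 zero1 neg1 Ops1 m1 k \<and> lcs G1 add1 zero1 neg1 Ops1 m1 k \<subseteq> G1"
proof (induction k)
  case 0 thus ?case using img by simp
next
  case (Suc k)
  define A where "A = lcs G1 add1 zero1 neg1 Ops1 m1 k"
  have A1: "A \<subseteq> G1" and A2: "lcs G2 add2 zero2 neg2 Ops2 m2 k = h ` A" using Suc by (auto simp: A_def)
  have hA: "h ` A \<subseteq> G2" using A1 img by auto
  define B where "B = prod_span G2 add2 zero2 neg2 Ops2 m2 (h ` A)"
  have BG: "B \<subseteq> G2" using C2[OF hA] by (simp add: B_def)
  have "h' ` h ` A = A" using A1 inv1 by (force simp: image_image)
  hence "h' ` B \<subseteq> prod_span G1 add1 zero1 neg1 Ops1 m1 A" using T2[OF hA] by (simp add: B_def)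
  hence "h ` h' ` B \<subseteq> h ` prod_span G1 add1 zero1 neg1 Ops1 m1 A" by blast
  moreover have "h ` h' ` B = B" using BG inv2 by (force simp: image_image)
  ultimately have "B \<subseteq> h ` prod_span G1 add1 zero1 neg1 Ops1 m1 A" by simp
  moreover have "h ` prod_span G1 add1 zero1 neg1 Ops1 m1 A \<subseteq> B" using T1[OF A1] by (simp add: B_def)
  ultimately have "B = h ` prod_span G1 add1 zero1 neg1 Ops1 m1 A" by blast
  thus ?case using A2 C1[OF A1] by (simp add: A_def B_def)
qed

lemma nilp_transfer:
  assumes T1: "\<And>S. S \<subseteq> G1 \<Longrightarrow> h ` prod_span G1 add1 zero1 neg1 Ops1 m1 S \<subseteq> prod_span G2 add2 zero2 neg2 Ops2 m2 (h ` S)"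
  and T2: "\<And>S. S \<subseteq> G2 \<Longrightarrow> h' ` prod_span G2 add2 zero2 neg2 Ops2 m2 S \<subseteq> prod_span G1 add1 zero1 neg1 Ops1 m1 (h' ` S)"
  and C1: "\<And>S. S \<subseteq> G1 \<Longrightarrow> prod_span G1 add1 zero1 neg1 Ops1 m1 S \<subseteq> G1"
  and C2: "\<And>S. S \<subseteq> G2 \<Longrightarrow> prod_span G2 add2 zero2 neg2 Ops2 m2 S \<subseteq> G2"
  and inv1: "\<And>x. x \<in> G1 \<Longrightarrow> h' (h x) = x" and inv2: "\<And>y. y \<in> G2 \<Longrightarrow> h (h' y) = y"
  and img: "h ` G1 = G2" and z: "zero1 \<in> G1" "h zero1 = zero2"
  shows "nilpotent_alg G1 add1 zero1 neg1 Ops1 m1 \<longleftrightarrow> nilpotent_alg G2 add2 zero2 neg2 Ops2 m2"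
proof -
  have L: "lcs G2 add2 zero2 neg2 Ops2 m2 k = h ` lcs G1 add1 zero1 neg1 Ops1 m1 k \<and> lcs G1 add1 zero1 neg1 Ops1 m1 k \<subseteq> G1" for k
    by (rule lcs_image[OF T1 T2 C1 C2 inv1 inv2 img])
  have I: "(h ` A = {zero2}) \<longleftrightarrow> A = {zero1}" if "A \<subseteq> G1" for A
  proof
    assume a: "h ` A = {zero2}"
    { fix x assume "x \<in> A"
      hence "h x = h zero1" using a z by auto
      hence "h' (h x) = h' (h zero1)" by simp
      hence "x = zero1" using inv1 z \<open>x \<in> A\<close> that by auto }
    moreover have "A \<noteq> {}" using a by auto
    ultimately show "A = {zero1}" by auto
  next
    assume "A = {zero1}" thus "h ` A = {zero2}" using z by simp
  qed
  have E: "lcs G2 add2 zero2 neg2 Ops2 m2 k = {zero2} \<longleftrightarrow> lcs G1 add1 zero1 neg1 Ops1 m1 k = {zero1}" for k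
    using L[of k] I[of "lcs G1 add1 zero1 neg1 Ops1 m1 k"] by simp
  show ?thesis unfolding nilpotent_alg_def using E by simp
qed

lemma struct_isoD:
  assumes "struct_iso G add Ops m1 m2 f"
  shows "bij_betw f G G"
    and "\<And>x y. x \<in> G \<Longrightarrow> y \<in> G \<Longrightarrow> f (add x y) = add (f x) (f y)"
    and "\<And>\<phi> x. \<phi> \<in> Ops \<Longrightarrow> x \<in> G \<Longrightarrow> f (\<phi> x) = \<phi> (f x)"
    and "\<And>x y. x \<in> G \<Longrightarrow> y \<in> G \<Longrightarrow> f (m1 x y) = m2 (f x) (f y)"
proof -
  have H0: "bij_betw f G G \<and> (\<forall>x\<in>G. \<forall>y\<in>G. f (add x y) = add (f x) (f y)) \<and>
     (\<forall>\<phi>\<in>Ops. \<forall>x\<in>G. f (\<phi> x) = \<phi> (f x)) \<and> (\<forall>x\<in>G. \<forall>y\<in>G. f (m1 x y) = m2 (f x) (f y))"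
    using assms unfolding struct_iso_def .
  note H = H0[THEN conjunct1] H0[THEN conjunct2, THEN conjunct1]
     H0[THEN conjunct2, THEN conjunct2, THEN conjunct1] H0[THEN conjunct2, THEN conjunct2, THEN conjunct2]
  show "bij_betw f G G" by (rule H(1))
  show "\<And>x y. x \<in> G \<Longrightarrow> y \<in> G \<Longrightarrow> f (add x y) = add (f x) (f y)"
    by (rule bspec[OF bspec[OF H(2)]])
  show "\<And>\<phi> x. \<phi> \<in> Ops \<Longrightarrow> x \<in> G \<Longrightarrow> f (\<phi> x) = \<phi> (f x)"
    by (rule bspec[OF bspec[OF H(3)]])
  show "\<And>x y. x \<in> G \<Longrightarrow> y \<in> G \<Longrightarrow> f (m1 x y) = m2 (f x) (f y)"
    by (rule bspec[OF bspec[OF H(4)]])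
qed

lemma struct_isoI:
  assumes "bij_betw f G G"
    and "\<And>x y. x \<in> G \<Longrightarrow> y \<in> G \<Longrightarrow> f (add x y) = add (f x) (f y)"
    and "\<And>\<phi> x. \<phi> \<in> Ops \<Longrightarrow> x \<in> G \<Longrightarrow> f (\<phi> x) = \<phi> (f x)"
    and "\<And>x y. x \<in> G \<Longrightarrow> y \<in> G \<Longrightarrow> f (m1 x y) = m2 (f x) (f y)"
  shows "struct_iso G add Ops m1 m2 f"
  unfolding struct_iso_def
proof (intro conjI ballI)
  show "bij_betw f G G" by (rule assms(1))
next
  fix x y assume "x \<in> G" "y \<in> G" thus "f (add x y) = add (f x) (f y)" by (rule assms(2))
next
  fix \<phi> x assume "\<phi> \<in> Ops" "x \<in> G" thus "f (\<phi> x) = \<phi> (f x)" by (rule assms(3))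
next
  fix x y assume "x \<in> G" "y \<in> G" thus "f (m1 x y) = m2 (f x) (f y)" by (rule assms(4))
qed

lemma iso_agree: "(\<And>x y. x \<in> G \<Longrightarrow> y \<in> G \<Longrightarrow> m x y = m' x y) \<Longrightarrow> struct_iso G add Ops m m' id"
  by (rule struct_isoI) auto

lemma iso_sym:
  assumes "struct_iso G add Ops m1 m2 f" "\<And>x y. x \<in> G \<Longrightarrow> y \<in> G \<Longrightarrow> add x y \<in> G"
    "\<And>\<phi> x. \<phi> \<in> Ops \<Longrightarrow> x \<in> G \<Longrightarrow> \<phi> x \<in> G" "\<And>x y. x \<in> G \<Longrightarrow> y \<in> G \<Longrightarrow> m1 x y \<in> G"
  shows "struct_iso G add Ops m2 m1 (inv_into G f)"
proof -
  note fD = struct_isoD[OF assms(1)]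
  note bij = fD(1)
  let ?g = "inv_into G f"
  have gb: "bij_betw ?g G G" using bij by (rule bij_betw_inv_into)
  have g1: "\<And>x. x \<in> G \<Longrightarrow> ?g x \<in> G" by (rule bij_betw_apply[OF gb])
  have g2: "\<And>x. x \<in> G \<Longrightarrow> f (?g x) = x" using bij by (meson bij_betw_inv_into_right)
  have g3: "\<And>x. x \<in> G \<Longrightarrow> ?g (f x) = x" using bij by (meson bij_betw_inv_into_left)
  show ?thesis
  proof (rule struct_isoI)
    show "bij_betw ?g G G" by (rule gb)
  next
    fix x y assume that: "x \<in> G" "y \<in> G"
    have "f (add (?g x) (?g y)) = add x y" using fD(2)[OF g1[OF that(1)] g1[OF that(2)]] g2[OF that(1)] g2[OF that(2)] by simp
    hence "?g (f (add (?g x) (?g y))) = ?g (add x y)" by simp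
    thus "?g (add x y) = add (?g x) (?g y)" using g3[OF assms(2)[OF g1[OF that(1)] g1[OF that(2)]]] by simp
  next
    fix \<phi> x assume that: "\<phi> \<in> Ops" "x \<in> G"
    have "f (\<phi> (?g x)) = \<phi> x" using fD(3)[OF that(1) g1[OF that(2)]] g2[OF that(2)] by simp
    hence "?g (f (\<phi> (?g x))) = ?g (\<phi> x)" by simp
    thus "?g (\<phi> x) = \<phi> (?g x)" using g3[OF assms(3)[OF that(1) g1[OF that(2)]]] by simp
  next
    fix x y assume that: "x \<in> G" "y \<in> G"
    have "f (m1 (?g x) (?g y)) = m2 x y" using fD(4)[OF g1[OF that(1)] g1[OF that(2)]] g2[OF that(1)] g2[OF that(2)] by simp
    hence "?g (f (m1 (?g x) (?g y))) = ?g (m2 x y)" by simp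
    thus "?g (m2 x y) = m1 (?g x) (?g y)" using g3[OF assms(4)[OF g1[OF that(1)] g1[OF that(2)]]] by simp
  qed
qed

lemma iso_trans:
  assumes "struct_iso G add Ops m1 m2 f" "struct_iso G add Ops m2 m3 g"
  shows "struct_iso G add Ops m1 m3 (g \<circ> f)"
proof -
  note fD = struct_isoD[OF assms(1)] and gD = struct_isoD[OF assms(2)]
  have fG: "\<And>x. x \<in> G \<Longrightarrow> f x \<in> G" by (rule bij_betw_apply[OF fD(1)])
  show ?thesis
  proof (rule struct_isoI)
    show "bij_betw (g \<circ> f) G G" using fD(1) gD(1) by (rule bij_betw_trans)
  next
    fix x y assume that: "x \<in> G" "y \<in> G"
    show "(g \<circ> f) (add x y) = add ((g \<circ> f) x) ((g \<circ> f) y)"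
      using fD(2)[OF that] gD(2)[OF fG[OF that(1)] fG[OF that(2)]] by simp
  next
    fix \<phi> x assume that: "\<phi> \<in> Ops" "x \<in> G"
    show "(g \<circ> f) (\<phi> x) = \<phi> ((g \<circ> f) x)"
      using fD(3)[OF that] gD(3)[OF that(1) fG[OF that(2)]] by simp
  next
    fix x y assume that: "x \<in> G" "y \<in> G"
    show "(g \<circ> f) (m1 x y) = m3 ((g \<circ> f) x) ((g \<circ> f) y)"
      using fD(4)[OF that] gD(4)[OF fG[OF that(1)] fG[OF that(2)]] by simp
  qed
qed

definition cls :: "('b \<Rightarrow> 'b \<Rightarrow> bool) \<Rightarrow> 'b set \<Rightarrow> 'b \<Rightarrow> 'b set" where
  "cls R S m = {m' \<in> S. R m m'}"

lemma iso_classes_cls: "iso_classes S G add Ops = cls (\<lambda>m m'. \<exists>f. struct_iso G add Ops m m' f) S ` S"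
  by (auto simp: iso_classes_def cls_def)

lemma cls_eq_iff:
  assumes refl: "\<And>x. x \<in> S \<Longrightarrow> R x x" and sym: "\<And>x y. x \<in> S \<Longrightarrow> y \<in> S \<Longrightarrow> R x y \<Longrightarrow> R y x"
  and trans: "\<And>x y z. x \<in> S \<Longrightarrow> y \<in> S \<Longrightarrow> z \<in> S \<Longrightarrow> R x y \<Longrightarrow> R y z \<Longrightarrow> R x z"
  and "x \<in> S" "y \<in> S"
  shows "cls R S x = cls R S y \<longleftrightarrow> R x y"
proof
  assume "cls R S x = cls R S y"
  hence "y \<in> cls R S x" using refl[OF assms(5)] assms(5) by (simp add: cls_def)
  thus "R x y" by (simp add: cls_def)
next
  assume r: "R x y"
  have "R y x" by (rule sym[OF assms(4) assms(5) r])
  show "cls R S x = cls R S y"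
  proof (intro set_eqI iffI)
    fix z assume "z \<in> cls R S x"
    hence z: "z \<in> S" "R x z" by (auto simp: cls_def)
    have "R y z" by (rule trans[OF assms(5) assms(4) z(1) \<open>R y x\<close> z(2)])
    thus "z \<in> cls R S y" using z by (simp add: cls_def)
  next
    fix z assume "z \<in> cls R S y"
    hence z: "z \<in> S" "R y z" by (auto simp: cls_def)
    have "R x z" by (rule trans[OF assms(4) assms(5) z(1) r z(2)])
    thus "z \<in> cls R S x" using z by (simp add: cls_def)
  qed
qed



context PL
begin

abbreviation "RS \<equiv> ring_structs p lam"
abbreviation "AS \<equiv> alg_structs p n lam"

lemma RS_D:
  assumes "m \<in> RS"
  shows RS_in: "\<And>x y. x \<in> UC \<Longrightarrow> y \<in> UC \<Longrightarrow> m x y \<in> UC"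
    and RS_addL: "\<And>x y z. x \<in> UC \<Longrightarrow> y \<in> UC \<Longrightarrow> z \<in> UC \<Longrightarrow> m (addU x y) z = addU (m x z) (m y z)"
    and RS_addR: "\<And>x y z. x \<in> UC \<Longrightarrow> y \<in> UC \<Longrightarrow> z \<in> UC \<Longrightarrow> m x (addU y z) = addU (m x y) (m x z)"
    and RS_p: "\<And>x y. x \<in> UC \<Longrightarrow> y \<in> UC \<Longrightarrow> nsmul addU U_zero p (m x y) = U_zero"
  using assms by (auto simp: ring_structs_def biadditive_def)

lemma AS_D:
  assumes "a \<in> AS"
  shows AS_in: "\<And>x y. x \<in> VC \<Longrightarrow> y \<in> VC \<Longrightarrow> a x y \<in> VC"
    and AS_addL: "\<And>x y z. x \<in> VC \<Longrightarrow> y \<in> VC \<Longrightarrow> z \<in> VC \<Longrightarrow> a (addV x y) z = addV (a x z) (a y z)"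
    and AS_addR: "\<And>x y z. x \<in> VC \<Longrightarrow> y \<in> VC \<Longrightarrow> z \<in> VC \<Longrightarrow> a x (addV y z) = addV (a x y) (a x z)"
    and AS_T: "\<And>x y. x \<in> VC \<Longrightarrow> y \<in> VC \<Longrightarrow> actV TT (a x y) = V_zero"
  using assms by (auto simp: alg_structs_def biadditive_def)

lemma AS_act:
  assumes "a \<in> AS" "c \<in> C_car p n" "v \<in> VC" "w \<in> VC"
  shows "a (actV c v) w = actV c (a v w)" "a v (actV c w) = actV c (a v w)"
proof -
  have oc: "ops_compatible VC OpsV a" using assms(1) by (simp add: alg_structs_def)
  have H: "\<forall>\<phi>\<in>OpsV. \<forall>x\<in>VC. \<forall>y\<in>VC. a (\<phi> x) y = \<phi> (a x y) \<and> a x (\<phi> y) = \<phi> (a x y)"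
    using oc unfolding ops_compatible_def .
  have c: "actV c \<in> OpsV" using assms(2) by (simp add: V_ops_def)
  have "a (actV c v) w = actV c (a v w) \<and> a v (actV c w) = actV c (a v w)"
    by (rule bspec[OF bspec[OF bspec[OF H c] assms(3)] assms(4)])
  thus "a (actV c v) w = actV c (a v w)" "a v (actV c w) = actV c (a v w)" by auto
qed

lemma OpsV_E: "\<phi> \<in> OpsV \<Longrightarrow> (\<And>c. c \<in> C_car p n \<Longrightarrow> \<phi> = actV c \<Longrightarrow> P) \<Longrightarrow> P"
  by (auto simp: V_ops_def)

lemma RS_homL: "m \<in> RS \<Longrightarrow> y \<in> UC \<Longrightarrow> homU (\<lambda>x. m x y)"
  by (simp add: homU_def RS_in RS_addL)
lemma RS_homR: "m \<in> RS \<Longrightarrow> x \<in> UC \<Longrightarrow> homU (\<lambda>y. m x y)"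
  by (simp add: homU_def RS_in RS_addR)
lemma AS_homL: "a \<in> AS \<Longrightarrow> y \<in> VC \<Longrightarrow> homV (\<lambda>x. a x y)"
  by (simp add: homV_def AS_in AS_addL)
lemma AS_homR: "a \<in> AS \<Longrightarrow> x \<in> VC \<Longrightarrow> homV (\<lambda>y. a x y)"
  by (simp add: homV_def AS_in AS_addR)

lemma RS_soc: "m \<in> RS \<Longrightarrow> x \<in> UC \<Longrightarrow> y \<in> UC \<Longrightarrow> m x y \<in> socU"
  using socU_nsmul_iff RS_in RS_p by blast

lemma AS_soc: "a \<in> AS \<Longrightarrow> x \<in> VC \<Longrightarrow> y \<in> VC \<Longrightarrow> a x y \<in> socV"
  using T_kill_soc AS_in AS_T by blast

lemma addU_mod_p: "i < t \<Longrightarrow> addU x y i mod int p = (x i + y i) mod int p"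
proof -
  assume i: "i < t"
  have "int p dvd int p ^ L i" using L_pos[OF i] by (simp add: dvd_power)
  thus ?thesis using i by (simp add: addU_apply mod_mod_cancel)
qed

lemma nsmulU_mod_p: "x \<in> UC \<Longrightarrow> i < t \<Longrightarrow> nsmul addU U_zero k x i mod int p = (int k * x i) mod int p"
proof -
  assume x: "x \<in> UC" and i: "i < t"
  have "int p dvd int p ^ L i" using L_pos[OF i] by (simp add: dvd_power)
  thus ?thesis using i x by (simp add: nsmulU mod_mod_cancel)
qed

lemma RS_R2_aux:
  assumes "x \<in> UC" "x' \<in> UC" "\<And>i. i < t \<Longrightarrow> x i mod int p = x' i mod int p"
  obtains u where "u \<in> UC" "x' = addU x (nsmul addU U_zero p u)"
proof -
  define u where "u = (\<lambda>i. if i < t then ((x' i - x i) div int p) mod (int p ^ L i) else 0)"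
  have uU: "u \<in> UC" by (simp add: u_def memU)
  have "x' = addU x (nsmul addU U_zero p u)"
  proof (rule U_eqI)
    fix i assume i: "i < t"
    have d: "int p dvd (x' i - x i)" using assms(3)[OF i] by (metis mod_eq_dvd_iff)
    have "addU x (nsmul addU U_zero p u) i = (x i + (int p * u i) mod (int p ^ L i)) mod (int p ^ L i)"
      using i uU by (simp add: addU_apply nsmulU)
    also have "\<dots> = (x i + int p * ((x' i - x i) div int p)) mod (int p ^ L i)"
      using i by (simp add: u_def mod_add_right_eq mod_mult_right_eq)
    also have "int p * ((x' i - x i) div int p) = x' i - x i" using d by simp
    also have "(x i + (x' i - x i)) mod (int p ^ L i) = x' i" using assms(2) i by (simp add: memU_mod)
    finally show "x' i = addU x (nsmul addU U_zero p u) i" by simp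
  qed (use assms in auto)
  thus ?thesis using uU that by blast
qed

lemma RS_R2L:
  assumes m: "m \<in> RS" and "x \<in> UC" "x' \<in> UC" "y \<in> UC" "\<And>i. i < t \<Longrightarrow> x i mod int p = x' i mod int p"
  shows "m x y = m x' y"
proof -
  obtain u where u: "u \<in> UC" "x' = addU x (nsmul addU U_zero p u)"
    using RS_R2_aux[OF assms(2,3,5)] by blast
  have "m x' y = addU (m x y) (m (nsmul addU U_zero p u) y)"
    using u assms by (simp add: RS_addL nsmulU_in)
  also have "m (nsmul addU U_zero p u) y = nsmul addU U_zero p (m u y)"
    using homU_nsmul[OF RS_homL[OF m assms(4)] u(1)] by simp
  also have "\<dots> = U_zero" using RS_p[OF m u(1) assms(4)] .
  finally show ?thesis using RS_in[OF m assms(2,4)] by simp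
qed

lemma RS_R2R:
  assumes m: "m \<in> RS" and "y \<in> UC" "y' \<in> UC" "x \<in> UC" "\<And>i. i < t \<Longrightarrow> y i mod int p = y' i mod int p"
  shows "m x y = m x y'"
proof -
  obtain u where u: "u \<in> UC" "y' = addU y (nsmul addU U_zero p u)"
    using RS_R2_aux[OF assms(2,3,5)] by blast
  have "m x y' = addU (m x y) (m x (nsmul addU U_zero p u))"
    using u assms by (simp add: RS_addR nsmulU_in)
  also have "m x (nsmul addU U_zero p u) = nsmul addU U_zero p (m x u)"
    using homU_nsmul[OF RS_homR[OF m assms(4)] u(1)] by simp
  also have "\<dots> = U_zero" using RS_p[OF m assms(4) u(1)] .
  finally show ?thesis using RS_in[OF m assms(4,2)] by simp
qed

lemma AS_R2_aux:
  assumes "v \<in> VC" "v' \<in> VC" "\<And>i. i < t \<Longrightarrow> v i 0 = v' i 0" "1 < n"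
  obtains u where "u \<in> VC" "v' = addV v (actV TT u)"
proof -
  define u where "u = (\<lambda>i j. if i < t \<and> j + 1 < L i then (v' i (j+1) - v i (j+1)) mod int p else 0)"
  have uV: "u \<in> VC" by (auto simp: u_def memV)
  have "v' = addV v (actV TT u)"
  proof (rule V_eqI)
    fix i j assume ij: "i < t" "j < L i"
    show "v' i j = addV v (actV TT u) i j"
    proof (cases "j = 0")
      case True thus ?thesis using ij assms by (simp add: addV_apply actV_TT memV_mod)
    next
      case False
      hence "actV TT u i j = (v' i j - v i j) mod int p" using ij assms(4)
        by (simp add: actV_TT u_def)
      hence "addV v (actV TT u) i j = (v i j + (v' i j - v i j)) mod int p"
        using ij by (simp add: addV_apply mod_add_right_eq)
      thus ?thesis using assms(2) ij by (simp add: memV_mod)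
    qed
  qed (use assms in auto)
  thus ?thesis using uV that by blast
qed

lemma V_eq_le1:
  assumes "n \<le> 1" "v \<in> VC" "v' \<in> VC" "\<And>i. i < t \<Longrightarrow> v i 0 = v' i 0"
  shows "v = v'"
proof (rule V_eqI)
  fix i j assume ij: "i < t" "j < L i"
  hence "j = 0" using n_le1[OF assms(1) ij(1)] by simp
  thus "v i j = v' i j" using assms(4) ij by simp
qed (use assms in auto)

lemma AS_R2L:
  assumes a: "a \<in> AS" and "v \<in> VC" "v' \<in> VC" "w \<in> VC" "\<And>i. i < t \<Longrightarrow> v i 0 = v' i 0"
  shows "a v w = a v' w"
proof (cases "1 < n")
  case True
  obtain u where u: "u \<in> VC" "v' = addV v (actV TT u)"
    using AS_R2_aux[OF assms(2,3,5) True] by blast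
  have "a v' w = addV (a v w) (a (actV TT u) w)"
    using u assms by (simp add: AS_addL)
  also have "a (actV TT u) w = actV TT (a u w)"
    using AS_act(1)[OF a TT_in_C u(1) assms(4)] .
  also have "\<dots> = V_zero" using AS_T[OF a u(1) assms(4)] .
  finally show ?thesis using AS_in[OF a assms(2,4)] by simp
next
  case False thus ?thesis using V_eq_le1 assms by (metis not_less)
qed

lemma AS_R2R:
  assumes a: "a \<in> AS" and "w \<in> VC" "w' \<in> VC" "v \<in> VC" "\<And>i. i < t \<Longrightarrow> w i 0 = w' i 0"
  shows "a v w = a v w'"
proof (cases "1 < n")
  case True
  obtain u where u: "u \<in> VC" "w' = addV w (actV TT u)"
    using AS_R2_aux[OF assms(2,3,5) True] by blast
  have "a v w' = addV (a v w) (a v (actV TT u))"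
    using u assms by (simp add: AS_addR)
  also have "a v (actV TT u) = actV TT (a v u)"
    using AS_act(2)[OF a TT_in_C assms(4) u(1)] .
  also have "\<dots> = V_zero" using AS_T[OF a assms(4) u(1)] .
  finally show ?thesis using AS_in[OF a assms(4,2)] by simp
next
  case False thus ?thesis using V_eq_le1 assms by (metis not_less)
qed


definition PsiR where "PsiR m = (\<lambda>v w. dlt (m (dlt' v) (dlt' w)))"
definition PsiA where "PsiA a = (\<lambda>x y. dlt' (a (dlt x) (dlt y)))"

lemma dlt'_addV_mod: assumes "v \<in> VC" "v' \<in> VC" "i < t"
  shows "dlt' (addV v v') i mod int p = addU (dlt' v) (dlt' v') i mod int p"
proof -
  have "dlt' (addV v v') i mod int p = addV v v' i 0" using assms by (simp add: dlt'_mod)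
  also have "\<dots> = (v i 0 + v' i 0) mod int p" using assms L_pos by (simp add: addV_apply)
  also have "\<dots> = (dlt' v i mod int p + dlt' v' i mod int p) mod int p" using assms by (simp add: dlt'_mod)
  also have "\<dots> = addU (dlt' v) (dlt' v') i mod int p" using assms by (simp add: addU_mod_p mod_add_eq)
  finally show ?thesis .
qed

lemma dlt'_act_mod: assumes "v \<in> VC" "c \<in> C_car p n" "i < t"
  shows "dlt' (actV c v) i mod int p = nsmul addU U_zero (nat (c 0)) (dlt' v) i mod int p"
proof -
  have c0: "int (nat (c 0)) = c 0" using C_nonneg0[OF assms(2)] by simp
  have "dlt' (actV c v) i mod int p = actV c v i 0" using assms by (simp add: dlt'_mod)
  also have "\<dots> = (c 0 * v i 0) mod int p" using assms L_pos by (simp add: actV_apply)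
  also have "\<dots> = (c 0 * (dlt' v i mod int p)) mod int p" using assms by (simp add: dlt'_mod)
  also have "\<dots> = nsmul addU U_zero (nat (c 0)) (dlt' v) i mod int p"
    using assms c0 by (simp add: nsmulU_mod_p mod_mult_right_eq)
  finally show ?thesis .
qed

lemma dlt_addU_0: assumes "i < t" shows "dlt (addU x x') i 0 = addV (dlt x) (dlt x') i 0"
  using assms L_pos[OF assms] by (simp add: dlt_0 addU_mod_p addV_apply mod_add_eq)

lemma PsiR_in: assumes m: "m \<in> RS" shows "PsiR m \<in> AS"
proof -
  have inV: "PsiR m v w \<in> VC" for v w by (simp add: PsiR_def)
  have socm: "v \<in> VC \<Longrightarrow> w \<in> VC \<Longrightarrow> m (dlt' v) (dlt' w) \<in> socU" for v w
    by (simp add: RS_soc[OF m])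
  have addL: "PsiR m (addV v v') w = addV (PsiR m v w) (PsiR m v' w)" if "v \<in> VC" "v' \<in> VC" "w \<in> VC" for v v' w
  proof -
    have "m (dlt' (addV v v')) (dlt' w) = m (addU (dlt' v) (dlt' v')) (dlt' w)"
      using that by (intro RS_R2L[OF m]) (auto simp: dlt'_addV_mod)
    also have "\<dots> = addU (m (dlt' v) (dlt' w)) (m (dlt' v') (dlt' w))" using that by (simp add: RS_addL[OF m])
    finally show ?thesis using that socm by (simp add: PsiR_def dlt_add_soc)
  qed
  have addR: "PsiR m v (addV w w') = addV (PsiR m v w) (PsiR m v w')" if "v \<in> VC" "w \<in> VC" "w' \<in> VC" for v w w'
  proof -
    have "m (dlt' v) (dlt' (addV w w')) = m (dlt' v) (addU (dlt' w) (dlt' w'))"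
      using that by (intro RS_R2R[OF m]) (auto simp: dlt'_addV_mod)
    also have "\<dots> = addU (m (dlt' v) (dlt' w)) (m (dlt' v) (dlt' w'))" using that by (simp add: RS_addR[OF m])
    finally show ?thesis using that socm by (simp add: PsiR_def dlt_add_soc)
  qed
  have actL: "PsiR m (actV c v) w = actV c (PsiR m v w)" if "c \<in> C_car p n" "v \<in> VC" "w \<in> VC" for c v w
  proof -
    have "m (dlt' (actV c v)) (dlt' w) = m (nsmul addU U_zero (nat (c 0)) (dlt' v)) (dlt' w)"
      using that by (intro RS_R2L[OF m]) (auto simp: dlt'_act_mod nsmulU_in)
    also have "\<dots> = nsmul addU U_zero (nat (c 0)) (m (dlt' v) (dlt' w))"
      using homU_nsmul[OF RS_homL[OF m dlt'_in[OF that(3)]] dlt'_in[OF that(2)]] .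
    finally show ?thesis using that socm by (simp add: PsiR_def dlt_nsmul_soc)
  qed
  have actR: "PsiR m v (actV c w) = actV c (PsiR m v w)" if "c \<in> C_car p n" "v \<in> VC" "w \<in> VC" for c v w
  proof -
    have "m (dlt' v) (dlt' (actV c w)) = m (dlt' v) (nsmul addU U_zero (nat (c 0)) (dlt' w))"
      using that by (intro RS_R2R[OF m]) (auto simp: dlt'_act_mod nsmulU_in)
    also have "\<dots> = nsmul addU U_zero (nat (c 0)) (m (dlt' v) (dlt' w))"
      using homU_nsmul[OF RS_homR[OF m dlt'_in[OF that(2)]] dlt'_in[OF that(3)]] .
    finally show ?thesis using that socm by (simp add: PsiR_def dlt_nsmul_soc)
  qed
  have T: "actV TT (PsiR m v w) = V_zero" if "v \<in> VC" "w \<in> VC" for v w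
    using that socm by (simp add: PsiR_def soc_T_kill dlt_soc)
  have "biadditive VC addV (PsiR m)"
    unfolding biadditive_def using inV addL addR by blast
  moreover have "ops_compatible VC OpsV (PsiR m)"
    unfolding ops_compatible_def
  proof (intro ballI conjI)
    fix \<phi> x y assume "\<phi> \<in> OpsV" "x \<in> VC" "y \<in> VC"
    then obtain c where c: "c \<in> C_car p n" "\<phi> = actV c" by (auto elim: OpsV_E)
    show "PsiR m (\<phi> x) y = \<phi> (PsiR m x y)" using actL c \<open>x \<in> VC\<close> \<open>y \<in> VC\<close> by simp
    show "PsiR m x (\<phi> y) = \<phi> (PsiR m x y)" using actR c \<open>x \<in> VC\<close> \<open>y \<in> VC\<close> by simp
  qed
  ultimately show ?thesis using T by (simp add: alg_structs_def)
qed

lemma PsiA_in: assumes a: "a \<in> AS" shows "PsiA a \<in> RS"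
proof -
  have soca: "x \<in> UC \<Longrightarrow> y \<in> UC \<Longrightarrow> a (dlt x) (dlt y) \<in> socV" for x y
    by (simp add: AS_soc[OF a])
  have inU: "x \<in> UC \<Longrightarrow> y \<in> UC \<Longrightarrow> PsiA a x y \<in> UC" for x y
    by (simp add: PsiA_def AS_in[OF a])
  have addL: "PsiA a (addU x x') y = addU (PsiA a x y) (PsiA a x' y)" if "x \<in> UC" "x' \<in> UC" "y \<in> UC" for x x' y
  proof -
    have "a (dlt (addU x x')) (dlt y) = a (addV (dlt x) (dlt x')) (dlt y)"
      using that by (intro AS_R2L[OF a]) (auto simp: dlt_addU_0)
    also have "\<dots> = addV (a (dlt x) (dlt y)) (a (dlt x') (dlt y))" by (simp add: AS_addL[OF a])
    finally show ?thesis using that soca by (simp add: PsiA_def dlt'_add_soc)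
  qed
  have addR: "PsiA a x (addU y y') = addU (PsiA a x y) (PsiA a x y')" if "x \<in> UC" "y \<in> UC" "y' \<in> UC" for x y y'
  proof -
    have "a (dlt x) (dlt (addU y y')) = a (dlt x) (addV (dlt y) (dlt y'))"
      using that by (intro AS_R2R[OF a]) (auto simp: dlt_addU_0)
    also have "\<dots> = addV (a (dlt x) (dlt y)) (a (dlt x) (dlt y'))" by (simp add: AS_addR[OF a])
    finally show ?thesis using that soca by (simp add: PsiA_def dlt'_add_soc)
  qed
  have P: "nsmul addU U_zero p (PsiA a x y) = U_zero" if "x \<in> UC" "y \<in> UC" for x y
    using that soca dlt'_soc socU_nsmul_iff inU by (simp add: PsiA_def)
  have "biadditive UC addU (PsiA a)"
    unfolding biadditive_def using inU addL addR by blast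
  thus ?thesis using P by (simp add: ring_structs_def)
qed

lemma PsiA_PsiR: "m \<in> RS \<Longrightarrow> x \<in> UC \<Longrightarrow> y \<in> UC \<Longrightarrow> PsiA (PsiR m) x y = m x y"
  by (simp add: PsiA_def PsiR_def RS_in)

lemma PsiR_PsiA: "a \<in> AS \<Longrightarrow> v \<in> VC \<Longrightarrow> w \<in> VC \<Longrightarrow> PsiR (PsiA a) v w = a v w"
  by (simp add: PsiA_def PsiR_def AS_in)

lemma PsiR_dlt: "m \<in> RS \<Longrightarrow> x \<in> UC \<Longrightarrow> y \<in> UC \<Longrightarrow> PsiR m (dlt x) (dlt y) = dlt (m x y)"
  by (simp add: PsiR_def)

lemma PsiR_lie:
  assumes m: "m \<in> RS" and L: "is_lie UC addU U_zero m"
  shows "is_lie VC addV V_zero (PsiR m)"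
proof -
  have l1: "\<And>x. x \<in> UC \<Longrightarrow> m x x = U_zero" and
    l2: "\<And>x y z. x \<in> UC \<Longrightarrow> y \<in> UC \<Longrightarrow> z \<in> UC \<Longrightarrow> addU (addU (m (m x y) z) (m (m y z) x)) (m (m z x) y) = U_zero"
    using L unfolding is_lie_def by blast+
  { fix v assume "v \<in> VC"
    hence "PsiR m v v = V_zero" using l1 by (simp add: PsiR_def dlt_zero) }
  moreover
  { fix v w z assume vwz: "v \<in> VC" "w \<in> VC" "z \<in> VC"
    define x y u where "x = dlt' v" and "y = dlt' w" and "u = dlt' z"
    have xyu: "x \<in> UC" "y \<in> UC" "u \<in> UC" using vwz by (auto simp: x_def y_def u_def)
    have e1: "PsiR m (PsiR m v w) z = dlt (m (m x y) u)" using xyu m by (simp add: PsiR_def x_def y_def u_def RS_in)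
    have e2: "PsiR m (PsiR m w z) v = dlt (m (m y u) x)" using xyu m by (simp add: PsiR_def x_def y_def u_def RS_in)
    have e3: "PsiR m (PsiR m z v) w = dlt (m (m u x) y)" using xyu m by (simp add: PsiR_def x_def y_def u_def RS_in)
    have s: "m (m x y) u \<in> socU" "m (m y u) x \<in> socU" "m (m u x) y \<in> socU"
      using xyu by (auto intro: RS_soc[OF m] RS_in[OF m])
    have "addV (addV (PsiR m (PsiR m v w) z) (PsiR m (PsiR m w z) v)) (PsiR m (PsiR m z v) w)
        = dlt (addU (addU (m (m x y) u) (m (m y u) x)) (m (m u x) y))"
      using s by (simp add: e1 e2 e3 dlt_add_soc socU_add)
    also have "\<dots> = V_zero" using l2[OF xyu] by (simp add: dlt_zero)
    finally have "addV (addV (PsiR m (PsiR m v w) z) (PsiR m (PsiR m w z) v)) (PsiR m (PsiR m z v) w) = V_zero" . }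
  ultimately show ?thesis unfolding is_lie_def by blast
qed

lemma PsiA_lie:
  assumes a: "a \<in> AS" and L: "is_lie VC addV V_zero a"
  shows "is_lie UC addU U_zero (PsiA a)"
proof -
  have l1: "\<And>x. x \<in> VC \<Longrightarrow> a x x = V_zero" and
    l2: "\<And>x y z. x \<in> VC \<Longrightarrow> y \<in> VC \<Longrightarrow> z \<in> VC \<Longrightarrow> addV (addV (a (a x y) z) (a (a y z) x)) (a (a z x) y) = V_zero"
    using L unfolding is_lie_def by blast+
  { fix v assume "v \<in> UC"
    hence "PsiA a v v = U_zero" using l1 by (simp add: PsiA_def dlt'_zero) }
  moreover
  { fix v w z assume vwz: "v \<in> UC" "w \<in> UC" "z \<in> UC"
    define x y u where "x = dlt v" and "y = dlt w" and "u = dlt z"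
    have xyu: "x \<in> VC" "y \<in> VC" "u \<in> VC" by (auto simp: x_def y_def u_def)
    have e1: "PsiA a (PsiA a v w) z = dlt' (a (a x y) u)" using xyu a by (simp add: PsiA_def x_def y_def u_def AS_in)
    have e2: "PsiA a (PsiA a w z) v = dlt' (a (a y u) x)" using xyu a by (simp add: PsiA_def x_def y_def u_def AS_in)
    have e3: "PsiA a (PsiA a z v) w = dlt' (a (a u x) y)" using xyu a by (simp add: PsiA_def x_def y_def u_def AS_in)
    have s: "a (a x y) u \<in> socV" "a (a y u) x \<in> socV" "a (a u x) y \<in> socV"
      using xyu by (auto intro: AS_soc[OF a] AS_in[OF a])
    have "addU (addU (PsiA a (PsiA a v w) z) (PsiA a (PsiA a w z) v)) (PsiA a (PsiA a z v) w)
        = dlt' (addV (addV (a (a x y) u) (a (a y u) x)) (a (a u x) y))"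
      using s by (simp add: e1 e2 e3 dlt'_add_soc socV_add)
    also have "\<dots> = U_zero" using l2[OF xyu] by (simp add: dlt'_zero)
    finally have "addU (addU (PsiA a (PsiA a v w) z) (PsiA a (PsiA a w z) v)) (PsiA a (PsiA a z v) w) = U_zero" . }
  ultimately show ?thesis unfolding is_lie_def by blast
qed


lemma spanU_sub: assumes "m \<in> RS" "S \<subseteq> UC"
  shows "prod_span UC addU U_zero negU {} m S \<subseteq> UC"
  by (rule span_closed) (use assms RS_in in auto)

lemma spanV_sub: assumes "a \<in> AS" "S \<subseteq> VC"
  shows "prod_span VC addV V_zero negV OpsV a S \<subseteq> VC"
proof (rule span_closed)
  fix \<phi> x assume "\<phi> \<in> OpsV" "x \<in> VC"
  thus "\<phi> x \<in> VC" by (auto elim: OpsV_E)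
qed (use assms AS_in in auto)

lemma PsiR_nilp:
  assumes m: "m \<in> RS"
  shows "nilpotent_alg UC addU U_zero negU {} m \<longleftrightarrow> nilpotent_alg VC addV V_zero negV OpsV (PsiR m)"
proof (rule nilp_transfer[where h = dlt and h' = dlt'])
  fix S assume S: "S \<subseteq> UC"
  show "dlt ` prod_span UC addU U_zero negU {} m S \<subseteq> prod_span VC addV V_zero negV OpsV (PsiR m) (dlt ` S)"
  proof (rule span_transfer[where P = socU])
    show "U_zero \<in> socU" by (rule socU_zero)
    show "\<And>x y. x \<in> S \<Longrightarrow> y \<in> UC \<Longrightarrow> m x y \<in> socU" using S RS_soc[OF m] by auto
    show "\<And>x y. x \<in> S \<Longrightarrow> y \<in> UC \<Longrightarrow> dlt (m x y) = PsiR m (dlt x) (dlt y)"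
      using S m by (auto simp: PsiR_dlt)
  qed (auto simp: socU_add socU_neg dlt_zero dlt_add_soc dlt_neg_soc)
next
  fix S assume S: "S \<subseteq> VC"
  show "dlt' ` prod_span VC addV V_zero negV OpsV (PsiR m) S \<subseteq> prod_span UC addU U_zero negU {} m (dlt' ` S)"
  proof (rule span_transfer[where P = socV])
    show "V_zero \<in> socV" by (rule socV_zero)
    show "\<And>\<phi> a. \<phi> \<in> OpsV \<Longrightarrow> a \<in> socV \<Longrightarrow> \<phi> a \<in> socV" by (auto elim: OpsV_E simp: socV_act)
    show "\<And>x y. x \<in> S \<Longrightarrow> y \<in> VC \<Longrightarrow> PsiR m x y \<in> socV"
      using S RS_soc[OF m] by (auto simp: PsiR_def dlt_soc)
    show "\<And>x y. x \<in> S \<Longrightarrow> y \<in> VC \<Longrightarrow> dlt' (PsiR m x y) = m (dlt' x) (dlt' y)"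
      using S m by (auto simp: PsiR_def RS_in)
    fix \<phi> a assume "\<phi> \<in> OpsV" "a \<in> socV" and h: "dlt' a \<in> prod_span UC addU U_zero negU {} m (dlt' ` S)"
    then obtain c where c: "c \<in> C_car p n" "\<phi> = actV c" by (auto elim: OpsV_E)
    have "dlt' (\<phi> a) = nsmul addU U_zero (nat (c 0)) (dlt' a)" using c \<open>a \<in> socV\<close> by (simp add: dlt'_act_soc)
    thus "dlt' (\<phi> a) \<in> prod_span UC addU U_zero negU {} m (dlt' ` S)" using nsmul_span[OF h] by simp
  qed (auto simp: socV_add socV_neg dlt'_zero dlt'_add_soc dlt'_neg_soc)
next
  show "\<And>S. S \<subseteq> UC \<Longrightarrow> prod_span UC addU U_zero negU {} m S \<subseteq> UC" using spanU_sub[OF m] .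
  show "\<And>S. S \<subseteq> VC \<Longrightarrow> prod_span VC addV V_zero negV OpsV (PsiR m) S \<subseteq> VC" using spanV_sub[OF PsiR_in[OF m]] .
  show "dlt ` UC = VC"
  proof
    show "dlt ` UC \<subseteq> VC" by auto
    show "VC \<subseteq> dlt ` UC"
    proof
      fix v assume "v \<in> VC" thus "v \<in> dlt ` UC" by (metis dlt_dlt' dlt'_in image_eqI)
    qed
  qed
qed (auto simp: dlt_zero)

lemma isoU_span:
  assumes f: "struct_iso UC addU {} m1 m2 f" and m1: "m1 \<in> RS" and S: "S \<subseteq> UC"
  shows "f ` prod_span UC addU U_zero negU {} m1 S \<subseteq> prod_span UC addU U_zero negU {} m2 (f ` S)"
proof -
  note fD = struct_isoD[OF f]
  have hom: "homU f" unfolding homU_def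
    by (intro conjI ballI) (simp_all add: bij_betw_apply[OF fD(1)] fD(2))
  show ?thesis
  proof (rule span_transfer[where P = UC])
    show "f U_zero = U_zero" by (rule homU_zero[OF hom])
    show "\<And>a. a \<in> UC \<Longrightarrow> f (negU a) = negU (f a)" using homU_neg[OF hom] .
    show "\<And>x y. x \<in> S \<Longrightarrow> y \<in> UC \<Longrightarrow> f (m1 x y) = m2 (f x) (f y)" using fD(4) S by blast
    show "\<And>y. y \<in> UC \<Longrightarrow> f y \<in> UC" by (rule bij_betw_apply[OF fD(1)])
    show "\<And>x y. x \<in> S \<Longrightarrow> y \<in> UC \<Longrightarrow> m1 x y \<in> UC" using S RS_in[OF m1] by blast
  qed (use fD(2) in auto)
qed

lemma isoU_nilp:
  assumes f: "struct_iso UC addU {} m1 m2 f" and m1: "m1 \<in> RS" and m2: "m2 \<in> RS"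
  shows "nilpotent_alg UC addU U_zero negU {} m1 \<longleftrightarrow> nilpotent_alg UC addU U_zero negU {} m2"
proof -
  note fD = struct_isoD[OF f]
  have g: "struct_iso UC addU {} m2 m1 (inv_into UC f)"
    by (rule iso_sym[OF f]) (use RS_in[OF m1] in auto)
  have hom: "homU f" unfolding homU_def
    by (intro conjI ballI) (simp_all add: bij_betw_apply[OF fD(1)] fD(2))
  show ?thesis
  proof (rule nilp_transfer[where h = f and h' = "inv_into UC f"])
    show "\<And>S. S \<subseteq> UC \<Longrightarrow> f ` prod_span UC addU U_zero negU {} m1 S \<subseteq> prod_span UC addU U_zero negU {} m2 (f ` S)"
      by (rule isoU_span[OF f m1])
    show "\<And>S. S \<subseteq> UC \<Longrightarrow> inv_into UC f ` prod_span UC addU U_zero negU {} m2 S \<subseteq> prod_span UC addU U_zero negU {} m1 (inv_into UC f ` S)"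
      by (rule isoU_span[OF g m2])
    show "\<And>S. S \<subseteq> UC \<Longrightarrow> prod_span UC addU U_zero negU {} m1 S \<subseteq> UC" using spanU_sub[OF m1] .
    show "\<And>S. S \<subseteq> UC \<Longrightarrow> prod_span UC addU U_zero negU {} m2 S \<subseteq> UC" using spanU_sub[OF m2] .
    show "\<And>x. x \<in> UC \<Longrightarrow> inv_into UC f (f x) = x" by (rule bij_betw_inv_into_left[OF fD(1)])
    show "\<And>x. x \<in> UC \<Longrightarrow> f (inv_into UC f x) = x" by (rule bij_betw_inv_into_right[OF fD(1)])
    show "f ` UC = UC" using fD(1) by (simp add: bij_betw_def)
    show "U_zero \<in> UC" by simp
    show "f U_zero = U_zero" by (rule homU_zero[OF hom])
  qed
qed

lemma isoV_span:
  assumes f: "struct_iso VC addV OpsV a1 a2 f" and a1: "a1 \<in> AS" and S: "S \<subseteq> VC"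
  shows "f ` prod_span VC addV V_zero negV OpsV a1 S \<subseteq> prod_span VC addV V_zero negV OpsV a2 (f ` S)"
proof -
  note fD = struct_isoD[OF f]
  have hom: "homV f" unfolding homV_def
    by (intro conjI ballI) (simp_all add: bij_betw_apply[OF fD(1)] fD(2))
  show ?thesis
  proof (rule span_transfer[where P = VC])
    show "f V_zero = V_zero" by (rule homV_zero[OF hom])
    show "\<And>a. a \<in> VC \<Longrightarrow> f (negV a) = negV (f a)" using homV_neg[OF hom] .
    show "\<And>x y. x \<in> S \<Longrightarrow> y \<in> VC \<Longrightarrow> f (a1 x y) = a2 (f x) (f y)" using fD(4) S by blast
    show "\<And>y. y \<in> VC \<Longrightarrow> f y \<in> VC" by (rule bij_betw_apply[OF fD(1)])
    show "\<And>x y. x \<in> S \<Longrightarrow> y \<in> VC \<Longrightarrow> a1 x y \<in> VC" using S AS_in[OF a1] by blast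
    show "\<And>\<phi> a. \<phi> \<in> OpsV \<Longrightarrow> a \<in> VC \<Longrightarrow> \<phi> a \<in> VC" by (auto elim: OpsV_E)
    fix \<phi> a assume "\<phi> \<in> OpsV" "a \<in> VC" "f a \<in> prod_span VC addV V_zero negV OpsV a2 (f ` S)"
    thus "f (\<phi> a) \<in> prod_span VC addV V_zero negV OpsV a2 (f ` S)"
      using fD(3)[of \<phi> a] by (simp add: prod_span.op)
  qed (use fD(2) in auto)
qed

lemma isoV_nilp:
  assumes f: "struct_iso VC addV OpsV a1 a2 f" and a1: "a1 \<in> AS" and a2: "a2 \<in> AS"
  shows "nilpotent_alg VC addV V_zero negV OpsV a1 \<longleftrightarrow> nilpotent_alg VC addV V_zero negV OpsV a2"
proof -
  note fD = struct_isoD[OF f]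
  have g: "struct_iso VC addV OpsV a2 a1 (inv_into VC f)"
    by (rule iso_sym[OF f]) (use AS_in[OF a1] in \<open>auto elim: OpsV_E\<close>)
  have hom: "homV f" unfolding homV_def
    by (intro conjI ballI) (simp_all add: bij_betw_apply[OF fD(1)] fD(2))
  show ?thesis
  proof (rule nilp_transfer[where h = f and h' = "inv_into VC f"])
    show "\<And>S. S \<subseteq> VC \<Longrightarrow> f ` prod_span VC addV V_zero negV OpsV a1 S \<subseteq> prod_span VC addV V_zero negV OpsV a2 (f ` S)"
      by (rule isoV_span[OF f a1])
    show "\<And>S. S \<subseteq> VC \<Longrightarrow> inv_into VC f ` prod_span VC addV V_zero negV OpsV a2 S \<subseteq> prod_span VC addV V_zero negV OpsV a1 (inv_into VC f ` S)"
      by (rule isoV_span[OF g a2])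
    show "\<And>S. S \<subseteq> VC \<Longrightarrow> prod_span VC addV V_zero negV OpsV a1 S \<subseteq> VC" using spanV_sub[OF a1] .
    show "\<And>S. S \<subseteq> VC \<Longrightarrow> prod_span VC addV V_zero negV OpsV a2 S \<subseteq> VC" using spanV_sub[OF a2] .
    show "\<And>x. x \<in> VC \<Longrightarrow> inv_into VC f (f x) = x" by (rule bij_betw_inv_into_left[OF fD(1)])
    show "\<And>x. x \<in> VC \<Longrightarrow> f (inv_into VC f x) = x" by (rule bij_betw_inv_into_right[OF fD(1)])
    show "f ` VC = VC" using fD(1) by (simp add: bij_betw_def)
    show "V_zero \<in> VC" by simp
    show "f V_zero = V_zero" by (rule homV_zero[OF hom])
  qed
qed

end


definition conv :: "(nat \<Rightarrow> int) \<Rightarrow> (nat \<Rightarrow> int) \<Rightarrow> nat \<Rightarrow> int" where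
  "conv a b l = (\<Sum>s=0..l. a s * b (l - s))"

lemma conv_fps: "conv a b l = fps_nth (Abs_fps a * Abs_fps b) l"
  by (simp add: conv_def fps_mult_nth)

lemma conv_assoc: "conv (conv a b) d l = conv a (conv b d) l"
proof -
  have e: "Abs_fps (conv a b) = Abs_fps a * Abs_fps b" "Abs_fps (conv b d) = Abs_fps b * Abs_fps d"
    by (simp_all add: conv_fps[abs_def] fps_nth_inverse)
  show ?thesis unfolding conv_fps[of "conv a b"] conv_fps[of a "conv b d"] e by (simp add: mult.assoc)
qed

lemma conv_cong1: "(\<And>s. s \<le> l \<Longrightarrow> a s = a' s) \<Longrightarrow> conv a b l = conv a' b l"
  by (simp add: conv_def)
lemma conv_cong2: "(\<And>s. s \<le> l \<Longrightarrow> b s = b' s) \<Longrightarrow> conv a b l = conv a b' l"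
  unfolding conv_def by (rule sum.cong) auto

lemma conv_mod1: "conv (\<lambda>s. a s mod (q::int)) b l mod q = conv a b l mod q"
proof -
  have "conv (\<lambda>s. a s mod q) b l mod q = (\<Sum>s=0..l. (a s mod q * b (l - s)) mod q) mod q"
    by (simp add: conv_def mod_sum_eq)
  also have "\<dots> = (\<Sum>s=0..l. (a s * b (l - s)) mod q) mod q" by (simp add: mod_mult_left_eq)
  also have "\<dots> = conv a b l mod q" by (simp add: conv_def mod_sum_eq)
  finally show ?thesis .
qed

lemma conv_mod2: "conv a (\<lambda>s. b s mod (q::int)) l mod q = conv a b l mod q"
proof -
  have "conv a (\<lambda>s. b s mod q) l mod q = (\<Sum>s=0..l. (a s * (b (l - s) mod q)) mod q) mod q"
    by (simp add: conv_def mod_sum_eq)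
  also have "\<dots> = (\<Sum>s=0..l. (a s * b (l - s)) mod q) mod q" by (simp add: mod_mult_right_eq)
  also have "\<dots> = conv a b l mod q" by (simp add: conv_def mod_sum_eq)
  finally show ?thesis .
qed

lemma conv_sum2: "conv a (\<lambda>s. \<Sum>i\<in>I. b i s) l = (\<Sum>i\<in>I. conv a (b i) l)"
  by (simp add: conv_def sum_distrib_left sum.swap[of _ I])

lemma conv_trunc1:
  assumes "\<And>r. r + M \<le> l \<Longrightarrow> b r = 0"
  shows "conv (\<lambda>s. if s < M then a s else 0) b l = conv a b l"
  unfolding conv_def
proof (rule sum.cong)
  fix s assume "s \<in> {0..l}"
  thus "(if s < M then a s else 0) * b (l - s) = a s * b (l - s)"
    using assms[of "l - s"] by auto
qed simp

context PL
begin

lemma actV_conv: "actV c v i j = (if i < t \<and> j < L i then conv c (v i) j mod int p else 0)"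
  by (simp add: actV_apply conv_def)

definition eU :: "nat \<Rightarrow> nat \<Rightarrow> int" where "eU i = (\<lambda>j. if j = i then 1 else 0)"
definition eV :: "nat \<Rightarrow> nat \<Rightarrow> nat \<Rightarrow> int" where "eV i = (\<lambda>j l. if j = i \<and> l = 0 then 1 else 0)"

lemma pow_ge_p: "i < t \<Longrightarrow> int p \<le> int p ^ L i"
proof -
  assume i: "i < t"
  have "int p ^ 1 \<le> int p ^ L i" using L_pos[OF i] p_int_gt1 by (intro power_increasing) auto
  thus ?thesis by simp
qed

lemma eU_in: assumes "i < t" shows "eU i \<in> UC"
proof -
  have "1 < int p ^ L i" using pow_ge_p[OF assms] p_int_gt1 by linarith
  thus ?thesis using assms by (auto simp: memU eU_def)
qed

lemma eV_in: "i < t \<Longrightarrow> eV i \<in> VC"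
  using L_pos p_int_gt1 by (auto simp: memV eV_def)

definition ExtU :: "(nat \<Rightarrow> nat \<Rightarrow> int) \<Rightarrow> (nat \<Rightarrow> int) \<Rightarrow> (nat \<Rightarrow> int)" where
  "ExtU X x = (\<lambda>j. if j < t then (\<Sum>i<t. x i * X i j) mod (int p ^ L j) else 0)"

definition ExtV :: "(nat \<Rightarrow> nat \<Rightarrow> nat \<Rightarrow> int) \<Rightarrow> (nat \<Rightarrow> nat \<Rightarrow> int) \<Rightarrow> (nat \<Rightarrow> nat \<Rightarrow> int)" where
  "ExtV Y v = (\<lambda>j l. if j < t \<and> l < L j then (\<Sum>i<t. conv (v i) (Y i j) l) mod int p else 0)"

definition consU where "consU X \<longleftrightarrow> (\<forall>i<t. \<forall>j<t. int p ^ (L j - L i) dvd X i j)"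
definition consV where "consV Y \<longleftrightarrow> (\<forall>i<t. \<forall>j<t. \<forall>r. r + L i < L j \<longrightarrow> Y i j r = 0)"

lemma ExtU_in[simp]: "ExtU X x \<in> UC" by (simp add: ExtU_def memU)
lemma ExtV_in[simp]: "ExtV Y v \<in> VC" by (simp add: ExtV_def memV)

lemma sum_mod_cong: "(\<And>i. i \<in> I \<Longrightarrow> A i mod (q::int) = B i mod q) \<Longrightarrow> (\<Sum>i\<in>I. A i) mod q = (\<Sum>i\<in>I. B i) mod q"
  by (metis (mono_tags, lifting) mod_sum_eq sum.cong)

lemma pow_dvd_cons: assumes "int p ^ (b - a) dvd X" shows "int p ^ b dvd int p ^ a * X"
proof (cases "b \<le> a")
  case True
  hence "int p ^ b dvd int p ^ a" by (simp add: le_imp_power_dvd)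
  thus ?thesis by simp
next
  case False
  obtain k where k: "X = int p ^ (b - a) * k" using assms by blast
  have "int p ^ a * X = int p ^ b * k" using False k by (simp add: power_add[symmetric] mult.assoc[symmetric])
  thus ?thesis by simp
qed

lemma modX: assumes "int p ^ (b - a) dvd X"
  shows "((y mod int p ^ a) * X) mod int p ^ b = (y * X) mod int p ^ b"
proof -
  have d: "int p ^ b dvd int p ^ a * X" by (rule pow_dvd_cons[OF assms])
  have "(y mod int p ^ a) * X - y * X = - (y div int p ^ a) * (int p ^ a * X)"
    by (simp add: minus_div_mult_eq_mod[symmetric] algebra_simps)
  hence "int p ^ b dvd ((y mod int p ^ a) * X - y * X)" using d by simp
  thus ?thesis by (simp add: mod_eq_dvd_iff)
qed

lemma ExtU_hom: assumes "consU X" shows "homU (ExtU X)"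
  unfolding homU_def
proof (intro conjI ballI)
  fix x y assume "x \<in> UC" "y \<in> UC"
  show "ExtU X (addU x y) = addU (ExtU X x) (ExtU X y)"
  proof (rule ext)
    fix j show "ExtU X (addU x y) j = addU (ExtU X x) (ExtU X y) j"
    proof (cases "j < t")
      case True
      have "(\<Sum>i<t. addU x y i * X i j) mod (int p ^ L j) = (\<Sum>i<t. (x i * X i j + y i * X i j)) mod (int p ^ L j)"
      proof (rule sum_mod_cong)
        fix i assume "i \<in> {..<t}"
        hence i: "i < t" by simp
        have "int p ^ (L j - L i) dvd X i j" using assms i True by (simp add: consU_def)
        hence "((x i + y i) mod int p ^ L i * X i j) mod int p ^ L j = ((x i + y i) * X i j) mod int p ^ L j"
          by (rule modX)
        thus "addU x y i * X i j mod int p ^ L j = (x i * X i j + y i * X i j) mod int p ^ L j"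
          using i by (simp add: addU_apply algebra_simps)
      qed
      also have "\<dots> = ((\<Sum>i<t. x i * X i j) mod (int p ^ L j) + (\<Sum>i<t. y i * X i j) mod (int p ^ L j)) mod (int p ^ L j)"
        by (simp add: sum.distrib mod_add_eq)
      finally show ?thesis using True by (simp add: ExtU_def addU_apply)
    qed (simp add: ExtU_def addU_apply)
  qed
qed simp

lemma addV_row: "i < t \<Longrightarrow> addV v w i = (\<lambda>s. if s < L i then (v i s + w i s) mod int p else 0)"
  by (simp add: addV_apply fun_eq_iff)
lemma actV_row: "i < t \<Longrightarrow> actV c v i = (\<lambda>s. if s < L i then conv c (v i) s mod int p else 0)"
  by (simp add: actV_conv fun_eq_iff)

lemma conv_add1: "conv (\<lambda>s. a s + b s) d l = conv a d l + conv b d l"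
  by (simp add: conv_def sum.distrib algebra_simps)

lemma consV_trunc: assumes "consV Y" "i < t" "j < t" "l < L j"
  shows "\<And>r. r + L i \<le> l \<Longrightarrow> Y i j r = 0"
  using assms unfolding consV_def by auto

lemma ExtV_hom: assumes "consV Y" shows "homV (ExtV Y)"
  unfolding homV_def
proof (intro conjI ballI)
  fix v w assume "v \<in> VC" "w \<in> VC"
  show "ExtV Y (addV v w) = addV (ExtV Y v) (ExtV Y w)"
  proof (intro ext)
    fix j l show "ExtV Y (addV v w) j l = addV (ExtV Y v) (ExtV Y w) j l"
    proof (cases "j < t \<and> l < L j")
      case True
      have "(\<Sum>i<t. conv (addV v w i) (Y i j) l) mod int p = (\<Sum>i<t. conv (v i) (Y i j) l + conv (w i) (Y i j) l) mod int p"
      proof (rule sum_mod_cong)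
        fix i assume "i \<in> {..<t}"
        hence i: "i < t" by simp
        have "conv (addV v w i) (Y i j) l = conv (\<lambda>s. (v i s + w i s) mod int p) (Y i j) l"
          unfolding addV_row[OF i] using consV_trunc[OF assms i] True by (intro conv_trunc1) auto
        hence "conv (addV v w i) (Y i j) l mod int p = conv (\<lambda>s. v i s + w i s) (Y i j) l mod int p"
          by (simp add: conv_mod1)
        thus "conv (addV v w i) (Y i j) l mod int p = (conv (v i) (Y i j) l + conv (w i) (Y i j) l) mod int p"
          by (simp add: conv_add1)
      qed
      also have "\<dots> = ((\<Sum>i<t. conv (v i) (Y i j) l) mod int p + (\<Sum>i<t. conv (w i) (Y i j) l) mod int p) mod int p"
        by (simp add: sum.distrib mod_add_eq)
      finally show ?thesis using True by (simp add: ExtV_def addV_apply)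
    qed (auto simp: ExtV_def addV_apply)
  qed
qed simp

lemma ExtV_row: "j < t \<Longrightarrow> ExtV Y v j = (\<lambda>l. if l < L j then (\<Sum>i<t. conv (v i) (Y i j) l) mod int p else 0)"
  by (simp add: ExtV_def fun_eq_iff)

lemma ExtV_lin: assumes "consV Y"
  shows "ExtV Y (actV c v) = actV c (ExtV Y v)"
proof (intro ext)
  fix j l show "ExtV Y (actV c v) j l = actV c (ExtV Y v) j l"
  proof (cases "j < t \<and> l < L j")
    case True
    have "(\<Sum>i<t. conv (actV c v i) (Y i j) l) mod int p = (\<Sum>i<t. conv c (conv (v i) (Y i j)) l) mod int p"
    proof (rule sum_mod_cong)
      fix i assume "i \<in> {..<t}"
      hence i: "i < t" by simp
      have "conv (actV c v i) (Y i j) l = conv (\<lambda>s. conv c (v i) s mod int p) (Y i j) l"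
        unfolding actV_row[OF i] using consV_trunc[OF assms i] True by (intro conv_trunc1) auto
      hence "conv (actV c v i) (Y i j) l mod int p = conv (conv c (v i)) (Y i j) l mod int p"
        by (simp add: conv_mod1)
      thus "conv (actV c v i) (Y i j) l mod int p = conv c (conv (v i) (Y i j)) l mod int p"
        by (simp add: conv_assoc)
    qed
    moreover have "actV c (ExtV Y v) j l = (\<Sum>i<t. conv c (conv (v i) (Y i j)) l) mod int p"
    proof -
      have "actV c (ExtV Y v) j l = conv c (ExtV Y v j) l mod int p" using True by (simp add: actV_conv)
      also have "conv c (ExtV Y v j) l = conv c (\<lambda>s. (\<Sum>i<t. conv (v i) (Y i j) s) mod int p) l"
        using True by (intro conv_cong2) (simp add: ExtV_row)
      also have "\<dots> mod int p = conv c (\<lambda>s. (\<Sum>i<t. conv (v i) (Y i j) s)) l mod int p"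
        by (rule conv_mod2)
      also have "\<dots> = (\<Sum>i<t. conv c (conv (v i) (Y i j)) l) mod int p"
        by (simp add: conv_sum2)
      finally show ?thesis .
    qed
    ultimately show ?thesis using True by (simp add: ExtV_def)
  qed (auto simp: ExtV_def actV_conv)
qed


definition truncU where "truncU k x = (\<lambda>i. if i < k then x i else 0)"
definition truncV where "truncV k v = (\<lambda>i l. if i < k then v i l else 0)"

lemma truncU_in: "x \<in> UC \<Longrightarrow> truncU k x \<in> UC"
  by (auto simp: memU truncU_def)
lemma truncV_in: "v \<in> VC \<Longrightarrow> truncV k v \<in> VC"
  by (auto simp: memV truncV_def)

lemma truncU_Suc: assumes "x \<in> UC" "k < t"
  shows "truncU (Suc k) x = addU (truncU k x) (nsmul addU U_zero (nat (x k)) (eU k))"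
proof (rule U_eqI)
  fix i assume i: "i < t"
  have xk: "int (nat (x k)) = x k" using assms by (simp add: memU)
  show "truncU (Suc k) x i = addU (truncU k x) (nsmul addU U_zero (nat (x k)) (eU k)) i"
    using i xk assms memU_mod[OF assms(1) i] eU_in[OF assms(2)]
    by (auto simp: truncU_def addU_apply nsmulU eU_def less_Suc_eq)
qed (use assms truncU_in nsmulU_in eU_in in auto)

lemma truncU_t: "x \<in> UC \<Longrightarrow> truncU t x = x"
  by (auto simp: truncU_def memU fun_eq_iff)

lemma truncV_t: "v \<in> VC \<Longrightarrow> truncV t v = v"
  by (auto simp: truncV_def memV fun_eq_iff)

lemma homU_decomp: assumes f: "homU f" and x: "x \<in> UC"
  shows "f x = ExtU (\<lambda>i j. f (eU i) j) x"
proof -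
  have fU: "\<And>y. y \<in> UC \<Longrightarrow> f y \<in> UC" and fa: "\<And>y z. y \<in> UC \<Longrightarrow> z \<in> UC \<Longrightarrow> f (addU y z) = addU (f y) (f z)"
    using f unfolding homU_def by blast+
  have "k \<le> t \<Longrightarrow> f (truncU k x) = (\<lambda>j. if j < t then (\<Sum>i<k. x i * f (eU i) j) mod (int p ^ L j) else 0)" for k
  proof (induction k)
    case 0
    have "truncU 0 x = U_zero" by (simp add: truncU_def U_zero_def fun_eq_iff)
    thus ?case using homU_zero[OF f] by (simp add: U_zero_def fun_eq_iff)
  next
    case (Suc k)
    hence k: "k < t" by simp
    have xk: "int (nat (x k)) = x k" using x k by (simp add: memU)
    have "f (truncU (Suc k) x) = addU (f (truncU k x)) (f (nsmul addU U_zero (nat (x k)) (eU k)))"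
      using truncU_Suc[OF x k] fa truncU_in[OF x] nsmulU_in eU_in[OF k] by simp
    also have "f (nsmul addU U_zero (nat (x k)) (eU k)) = nsmul addU U_zero (nat (x k)) (f (eU k))"
      by (rule homU_nsmul[OF f eU_in[OF k]])
    finally show ?case using Suc k xk fU[OF eU_in[OF k]]
      by (auto simp: fun_eq_iff addU_apply nsmulU mod_add_eq algebra_simps)
  qed
  from this[of t] show ?thesis using truncU_t[OF x] by (simp add: ExtU_def)
qed

lemma row_in_C: assumes v: "v \<in> VC" and k: "k < t" shows "v k \<in> C_car p n"
proof -
  have a: "\<And>j. j < L k \<Longrightarrow> 0 \<le> v k j \<and> v k j < int p" and b: "\<And>j. \<not> j < L k \<Longrightarrow> v k j = 0"
    using v k unfolding memV by blast+
  have "0 \<le> v k j \<and> v k j < int p" for j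
    using a[of j] b[of j] p_pos by (cases "j < L k") auto
  moreover have "v k j = 0" if "n \<le> j" for j using b L_le_n[OF k] that by simp
  ultimately show ?thesis by (simp add: C_car_def)
qed

lemma conv_eV: "conv a (eV k i) l = (if i = k then a l else 0)"
proof -
  have "conv a (eV k i) l = (\<Sum>s\<in>{0..l}. if s = l then (if i = k then a l else 0) else 0)"
    unfolding conv_def by (rule sum.cong) (auto simp: eV_def)
  thus ?thesis by (subst (asm) sum.delta) auto
qed

lemma truncV_Suc: assumes "v \<in> VC" "k < t"
  shows "truncV (Suc k) v = addV (truncV k v) (actV (v k) (eV k))"
proof (rule V_eqI)
  fix i j assume ij: "i < t" "j < L i"
  show "truncV (Suc k) v i j = addV (truncV k v) (actV (v k) (eV k)) i j"
    using ij memV_mod[OF assms(1) ij] by (auto simp: truncV_def addV_apply actV_conv conv_eV less_Suc_eq)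
qed (use assms truncV_in in auto)

lemma homV_decomp: assumes g: "homV g" and gl: "\<And>c w. c \<in> C_car p n \<Longrightarrow> w \<in> VC \<Longrightarrow> g (actV c w) = actV c (g w)"
  and v: "v \<in> VC"
  shows "g v = ExtV (\<lambda>i. g (eV i)) v"
proof -
  have gV: "\<And>y. y \<in> VC \<Longrightarrow> g y \<in> VC" and ga: "\<And>y z. y \<in> VC \<Longrightarrow> z \<in> VC \<Longrightarrow> g (addV y z) = addV (g y) (g z)"
    using g unfolding homV_def by blast+
  have "k \<le> t \<Longrightarrow> g (truncV k v) = (\<lambda>j l. if j < t \<and> l < L j then (\<Sum>i<k. conv (v i) (g (eV i) j) l) mod int p else 0)" for k
  proof (induction k)
    case 0
    have "truncV 0 v = V_zero" by (simp add: truncV_def V_zero_def fun_eq_iff)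
    thus ?case using homV_zero[OF g] by (simp add: V_zero_def fun_eq_iff)
  next
    case (Suc k)
    hence k: "k < t" by simp
    have "g (truncV (Suc k) v) = addV (g (truncV k v)) (g (actV (v k) (eV k)))"
      using truncV_Suc[OF v k] ga truncV_in[OF v] by simp
    also have "g (actV (v k) (eV k)) = actV (v k) (g (eV k))"
      by (rule gl[OF row_in_C[OF v k] eV_in[OF k]])
    finally show ?case using Suc k
      by (auto simp: fun_eq_iff addV_apply actV_conv mod_add_eq)
  qed
  from this[of t] show ?thesis using truncV_t[OF v] by (simp add: ExtV_def)
qed

definition RelXY where
  "RelXY X Y \<longleftrightarrow> consU X \<and> (\<forall>i<t. \<forall>j<t. 0 \<le> X i j \<and> X i j < int p ^ L j) \<and>
     (\<forall>i<t. \<forall>j<t. \<forall>l. Y i j l = (if l < L j then (X i j div int p ^ l) mod int p else 0))"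

lemma pow_dvd_digit0: "int p ^ Suc r dvd X \<Longrightarrow> (X div int p ^ r) mod int p = 0"
proof -
  assume "int p ^ Suc r dvd X"
  then obtain k where "X = int p ^ Suc r * k" by blast
  hence "X div int p ^ r = int p * k" by (simp add: mult.assoc)
  thus ?thesis by simp
qed

lemma RelXY_Y: "RelXY X Y \<Longrightarrow> i < t \<Longrightarrow> j < t \<Longrightarrow> Y i j l = (if l < L j then (X i j div int p ^ l) mod int p else 0)"
  by (simp add: RelXY_def)

lemma RelXY_consV: assumes "RelXY X Y" shows "consV Y"
  unfolding consV_def
proof (intro allI impI)
  fix i j r assume ij: "i < t" "j < t" and r: "r + L i < L j"
  have "int p ^ (L j - L i) dvd X i j" using assms ij by (simp add: RelXY_def consU_def)
  moreover have "int p ^ Suc r dvd int p ^ (L j - L i)" using r by (intro le_imp_power_dvd) simp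
  ultimately have "int p ^ Suc r dvd X i j" by (rule dvd_trans[rotated])
  thus "Y i j r = 0" using RelXY_Y[OF assms ij, of r] r by (simp add: pow_dvd_digit0)
qed

lemma conv_0: "conv a b 0 = a 0 * b 0" by (simp add: conv_def)

lemma S1: assumes R: "RelXY X Y" and v: "v \<in> VC" and j: "j < t"
  shows "ExtV Y v j 0 = ExtU X (dlt' v) j mod int p"
proof -
  have pd: "int p dvd int p ^ L j" using L_pos[OF j] by (simp add: dvd_power)
  have "ExtV Y v j 0 = (\<Sum>i<t. v i 0 * Y i j 0) mod int p" using j L_pos[OF j] by (simp add: ExtV_def conv_0)
  also have "\<dots> = (\<Sum>i<t. dlt' v i * X i j) mod int p"
  proof (rule sum_mod_cong)
    fix i assume "i \<in> {..<t}"
    hence i: "i < t" by simp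
    have "Y i j 0 = X i j mod int p" using RelXY_Y[OF R i j, of 0] L_pos[OF j] by simp
    hence "v i 0 * Y i j 0 mod int p = v i 0 * X i j mod int p" by (simp add: mod_mult_right_eq)
    also have "\<dots> = (dlt' v i mod int p) * X i j mod int p" using dlt'_mod[OF v i] by simp
    also have "\<dots> = dlt' v i * X i j mod int p" by (simp add: mod_mult_left_eq)
    finally show "v i 0 * Y i j 0 mod int p = dlt' v i * X i j mod int p" .
  qed
  also have "\<dots> = ExtU X (dlt' v) j mod int p" using j pd by (simp add: ExtU_def mod_mod_cancel)
  finally show ?thesis .
qed


lemma socU_val: assumes "z \<in> socU" "i < t"
  shows "z i = (z i div int p ^ (L i - 1)) * int p ^ (L i - 1)"
    and "0 \<le> z i div int p ^ (L i - 1)" and "z i div int p ^ (L i - 1) < int p"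
proof -
  have d: "int p ^ (L i - 1) dvd z i" and zU: "z \<in> UC" using assms by (auto simp: socU_def)
  show e: "z i = (z i div int p ^ (L i - 1)) * int p ^ (L i - 1)" using d by simp
  have b: "0 \<le> z i" "z i < int p ^ L i" using zU assms(2) by (auto simp: memU)
  show "0 \<le> z i div int p ^ (L i - 1)" using b by (simp add: pos_imp_zdiv_nonneg_iff)
  have "(z i div int p ^ (L i - 1)) * int p ^ (L i - 1) < int p * int p ^ (L i - 1)"
    using e b pow_L_split[OF assms(2)] by simp
  thus "z i div int p ^ (L i - 1) < int p" by (simp add: mult_less_cancel_right)
qed

lemma dlt_socU_row: assumes "z \<in> socU" "i < t"
  shows "dlt z i s = (if s = L i - 1 then z i div int p ^ (L i - 1) else 0)"
proof -
  have ds: "dlt z \<in> socV" using assms(1) by (rule dlt_soc)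
  have Li: "0 < L i" using L_pos[OF assms(2)] .
  show ?thesis
  proof (cases "s = L i - 1")
    case True thus ?thesis using assms socU_val[OF assms] Li by (simp add: dlt_def)
  next
    case False
    show ?thesis
    proof (cases "s < L i")
      case True
      hence "s + 1 < L i" using False by simp
      thus ?thesis using ds assms False by (auto simp: socV_def)
    next
      case False2: False thus ?thesis using False by (simp add: dlt_def)
    qed
  qed
qed

lemma S2: assumes R: "RelXY X Y" and z: "z \<in> socU"
  shows "ExtV Y (dlt z) = dlt (ExtU X z)"
proof (rule V_eqI)
  fix j l assume j: "j < t" and l: "l < L j"
  define c where "c i = z i div int p ^ (L i - 1)" for i
  define q where "q i = X i j div int p ^ (L j - L i)" for i
  define Q where "Q = (\<Sum>i<t. if L i \<le> L j then c i * q i else 0)"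
  have cV: "X i j = int p ^ (L j - L i) * q i" if "i < t" for i
  proof -
    have "int p ^ (L j - L i) dvd X i j" using R that j by (simp add: RelXY_def consU_def)
    thus ?thesis by (simp add: q_def)
  qed
  have consY: "consV Y" by (rule RelXY_consV[OF R])
  have B: "conv (dlt z i) (Y i j) l = (if l = L j - 1 \<and> L i \<le> L j then c i * (q i mod int p) else 0)" if i: "i < t" for i
  proof -
    have "conv (dlt z i) (Y i j) l = (\<Sum>s\<in>{0..l}. if s = L i - 1 then c i * Y i j (l - s) else 0)"
      unfolding conv_def by (rule sum.cong) (auto simp: dlt_socU_row[OF z i] c_def)
    also have "\<dots> = (if L i - 1 \<le> l then c i * Y i j (l - (L i - 1)) else 0)"
      by (subst sum.delta) auto
    also have "\<dots> = (if l = L j - 1 \<and> L i \<le> L j then c i * (q i mod int p) else 0)"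
    proof (cases "L i - 1 \<le> l")
      case True
      have Li: "0 < L i" "0 < L j" using L_pos i j by auto
      show ?thesis
      proof (cases "L i \<le> L j")
        case le: True
        show ?thesis
        proof (cases "l = L j - 1")
          case True
          hence "l - (L i - 1) = L j - L i" using Li le by simp
          moreover have "L j - L i < L j" using Li by simp
          ultimately show ?thesis using True le \<open>L i - 1 \<le> l\<close> RelXY_Y[OF R i j] by (simp add: q_def)
        next
          case False
          hence "l - (L i - 1) + L i < L j" using l Li \<open>L i - 1 \<le> l\<close> by simp
          hence "Y i j (l - (L i - 1)) = 0" using consY i j by (simp add: consV_def)
          thus ?thesis using False \<open>L i - 1 \<le> l\<close> by simp
        qed
      next
        case False thus ?thesis using True l by simp
      qed
    next
      case False
      thus ?thesis using L_pos[OF j] by auto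
    qed
    finally show ?thesis .
  qed
  have Pj: "int p ^ L j = int p * int p ^ (L j - 1)" by (rule pow_L_split[OF j])
  have C: "(\<Sum>i<t. z i * X i j) mod int p ^ L j = (Q mod int p) * int p ^ (L j - 1)"
  proof -
    have "(\<Sum>i<t. z i * X i j) mod int p ^ L j = (\<Sum>i<t. (if L i \<le> L j then c i * q i else 0) * int p ^ (L j - 1)) mod int p ^ L j"
    proof (rule sum_mod_cong)
      fix i assume "i \<in> {..<t}"
      hence i: "i < t" by simp
      have zi: "z i = c i * int p ^ (L i - 1)" using socU_val(1)[OF z i] by (simp add: c_def)
      show "z i * X i j mod int p ^ L j = (if L i \<le> L j then c i * q i else 0) * int p ^ (L j - 1) mod int p ^ L j"
      proof (cases "L i \<le> L j")
        case True
        have "int p ^ (L i - 1) * int p ^ (L j - L i) = int p ^ (L j - 1)"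
          using True L_pos[OF i] by (simp add: power_add[symmetric])
        moreover have "z i * X i j = c i * q i * (int p ^ (L i - 1) * int p ^ (L j - L i))"
          unfolding zi cV[OF i] by (simp only: mult_ac)
        ultimately have "z i * X i j = c i * q i * int p ^ (L j - 1)" by simp
        thus ?thesis using True by simp
      next
        case False
        have "int p ^ L j dvd int p ^ (L i - 1)" using False by (intro le_imp_power_dvd) simp
        hence "int p ^ L j dvd z i * X i j" using zi by simp
        thus ?thesis using False by simp
      qed
    qed
    also have "\<dots> = (Q * int p ^ (L j - 1)) mod (int p * int p ^ (L j - 1))"
      by (simp add: Q_def sum_distrib_right Pj)
    also have "\<dots> = (Q mod int p) * int p ^ (L j - 1)" by (rule mod_mult_mult2)
    finally show ?thesis .
  qed
  have RHS: "dlt (ExtU X z) j l = (if l = L j - 1 then Q mod int p else 0)"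
  proof -
    have "dlt (ExtU X z) j l = (((Q mod int p) * int p ^ (L j - 1)) div int p ^ l) mod int p"
      using j l C by (simp add: dlt_def ExtU_def)
    also have "\<dots> = (if l = L j - 1 then Q mod int p else 0)"
    proof (cases "l = L j - 1")
      case True thus ?thesis by simp
    next
      case False
      hence lt: "l < L j - 1" using l by simp
      have "int p ^ (L j - 1) = int p ^ (L j - 1 - l) * int p ^ l" using lt by (simp add: power_add[symmetric])
      hence "((Q mod int p) * int p ^ (L j - 1)) div int p ^ l = (Q mod int p) * int p ^ (L j - 1 - l)"
        by (simp add: mult.assoc)
      moreover have "int p dvd int p ^ (L j - 1 - l)" using lt by (intro dvd_power) auto
      ultimately show ?thesis using False by simp
    qed
    finally show ?thesis .
  qed
  have "ExtV Y (dlt z) j l = (\<Sum>i<t. if l = L j - 1 \<and> L i \<le> L j then c i * (q i mod int p) else 0) mod int p"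
    using j l B by (simp add: ExtV_def)
  also have "\<dots> = (if l = L j - 1 then Q mod int p else 0)"
  proof (cases "l = L j - 1")
    case True
    have "(\<Sum>i<t. if L i \<le> L j then c i * (q i mod int p) else 0) mod int p = Q mod int p"
      unfolding Q_def by (rule sum_mod_cong) (simp add: mod_mult_right_eq)
    thus ?thesis using True by simp
  next
    case False thus ?thesis by simp
  qed
  finally show "ExtV Y (dlt z) j l = dlt (ExtU X z) j l" using RHS by simp
qed auto

end


context PL
begin

lemma negU_negU: "x \<in> UC \<Longrightarrow> negU (negU x) = x"
  by (rule U_eqI) (auto simp: negU_apply mod_minus_eq memU_mod)
lemma negV_negV: "x \<in> VC \<Longrightarrow> negV (negV x) = x"
  by (rule V_eqI) (auto simp: negV_apply mod_minus_eq memV_mod)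

lemma nsmulU_1: "x \<in> UC \<Longrightarrow> nsmul addU U_zero 1 x = x"
  by (rule U_eqI) (auto simp: nsmulU memU_mod nsmulU_in)

lemma nsmulU_mult: assumes x: "x \<in> UC" shows "nsmul addU U_zero (a * b) x = nsmul addU U_zero a (nsmul addU U_zero b x)"
  unfolding nsmulU[OF nsmulU_in[OF x]] unfolding nsmulU[OF x]
  by (simp add: fun_eq_iff mod_mult_right_eq mult.assoc)

lemma nsmulU_zero: "nsmul addU U_zero k U_zero = U_zero"
  unfolding nsmulU[OF zeroU_in] by (simp add: U_zero_def fun_eq_iff)

lemma nsmulU_pow_n: assumes "x \<in> UC" shows "nsmul addU U_zero (p ^ n) x = U_zero"
proof -
  have "(int p ^ n * x i) mod int p ^ L i = 0" if "i < t" for i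
  proof -
    have "int p ^ L i dvd int p ^ n" using L_le_n[OF that] by (rule le_imp_power_dvd)
    thus ?thesis by simp
  qed
  thus ?thesis unfolding nsmulU[OF assms] by (simp add: U_zero_def fun_eq_iff)
qed

lemma kerU: assumes f: "homU f" and s: "\<And>z. z \<in> socU \<Longrightarrow> f z = U_zero \<Longrightarrow> z = U_zero"
  and x: "x \<in> UC" "f x = U_zero"
  shows "x = U_zero"
proof -
  have "\<forall>x\<in>UC. nsmul addU U_zero (p ^ k) x = U_zero \<longrightarrow> f x = U_zero \<longrightarrow> x = U_zero" for k
  proof (induction k)
    case 0 thus ?case by (simp add: nsmulU_1)
  next
    case (Suc k)
    show ?case
    proof (intro ballI impI)
      fix x assume xU: "x \<in> UC" and h: "nsmul addU U_zero (p ^ Suc k) x = U_zero" and fx: "f x = U_zero"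
      have y: "nsmul addU U_zero p x \<in> UC" using xU by (rule nsmulU_in)
      have "nsmul addU U_zero (p ^ k) (nsmul addU U_zero p x) = U_zero"
        using h xU by (simp add: nsmulU_mult[symmetric] mult.commute)
      moreover have "f (nsmul addU U_zero p x) = U_zero"
        using homU_nsmul[OF f xU] fx by (simp add: nsmulU_zero)
      ultimately have "nsmul addU U_zero p x = U_zero" using Suc y by blast
      hence "x \<in> socU" using socU_nsmul_iff[OF xU] by simp
      thus "x = U_zero" using s fx by blast
    qed
  qed
  thus ?thesis using x nsmulU_pow_n[OF x(1)] by blast
qed

lemma injU: assumes f: "homU f" and s: "\<And>z. z \<in> socU \<Longrightarrow> f z = U_zero \<Longrightarrow> z = U_zero"
  shows "inj_on f UC"
proof (rule inj_onI)
  fix x x' assume xx: "x \<in> UC" "x' \<in> UC" "f x = f x'"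
  have fU: "\<And>y. y \<in> UC \<Longrightarrow> f y \<in> UC" and fa: "\<And>y z. y \<in> UC \<Longrightarrow> z \<in> UC \<Longrightarrow> f (addU y z) = addU (f y) (f z)"
    using f unfolding homU_def by blast+
  have "f (addU x (negU x')) = addU (f x') (negU (f x'))"
    using fa[OF xx(1) negU_in] homU_neg[OF f xx(2)] xx(3) by simp
  also have "\<dots> = U_zero" by (rule addU_neg)
  finally have gd: "f (addU x (negU x')) = U_zero" .
  have "addU x (negU x') = U_zero" by (rule kerU[OF f s addU_in gd])
  hence "addU (negU x') x = U_zero" by (simp add: addU_comm)
  hence "x = negU (negU x')" using negU_unique xx(1) by blast
  thus "x = x'" using negU_negU[OF xx(2)] by simp
qed

abbreviation "Tk k \<equiv> (actV TT ^^ k)"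

lemma Tk_in: "v \<in> VC \<Longrightarrow> Tk k v \<in> VC"
  by (induction k) auto

lemma actV_V_zero: "actV c V_zero = V_zero"
  by (simp add: V_act_def V_zero_def fun_eq_iff)

lemma Tk_zero: "Tk k V_zero = V_zero"
  by (induction k) (auto simp: actV_V_zero)

lemma g_Tk: assumes "\<And>w. w \<in> VC \<Longrightarrow> g (actV TT w) = actV TT (g w)" "v \<in> VC"
  shows "g (Tk k v) = Tk k (g v)"
  by (induction k) (use assms Tk_in in auto)

lemma Tk_formula: assumes "1 < n" "v \<in> VC"
  shows "Tk k v i j = (if i < t \<and> j < L i then (if k \<le> j then v i (j - k) else 0) else 0)"
proof (induction k arbitrary: j)
  case 0 thus ?case using assms(2) by (auto simp: memV)
next
  case (Suc k)
  show ?case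
  proof (cases "i < t \<and> j < L i")
    case True
    have "Tk (Suc k) v i j = actV TT (Tk k v) i j" by simp
    also have "\<dots> = (if 0 < j then Tk k v i (j - 1) mod int p else 0)" using True assms(1) by (simp add: actV_TT)
    also have "\<dots> = (if Suc k \<le> j then v i (j - Suc k) else 0)"
      using Suc[of "j - 1"] True memV_mod[OF assms(2), of i] by auto
    finally show ?thesis using True by simp
  next
    case False
    have "Tk (Suc k) v i j = actV TT (Tk k v) i j" by simp
    also have "\<dots> = 0" using False by (simp only: actV_conv[of TT "Tk k v" i j]) simp
    finally show ?thesis using False by auto
  qed
qed

lemma Tk_n: assumes "v \<in> VC" shows "Tk (Suc n) v = V_zero"
proof (cases "1 < n")
  case True
  show ?thesis
  proof (intro ext)
    fix i j show "Tk (Suc n) v i j = V_zero i j"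
      using Tk_formula[OF True assms, of "Suc n" i j] L_le_n[of i] by (auto simp: V_zero_def)
  qed
next
  case False
  hence "TT = (\<lambda>_. 0)" by (intro TT_le1) simp
  thus ?thesis by (simp add: actV_zero_scalar)
qed

lemma kerV: assumes g: "homV g" and gT: "\<And>w. w \<in> VC \<Longrightarrow> g (actV TT w) = actV TT (g w)"
  and s: "\<And>z. z \<in> socV \<Longrightarrow> g z = V_zero \<Longrightarrow> z = V_zero"
  and x: "x \<in> VC" "g x = V_zero"
  shows "x = V_zero"
proof -
  have "\<forall>x\<in>VC. Tk k x = V_zero \<longrightarrow> g x = V_zero \<longrightarrow> x = V_zero" for k
  proof (induction k)
    case 0 thus ?case by simp
  next
    case (Suc k)
    show ?case
    proof (intro ballI impI)
      fix x assume xV: "x \<in> VC" and h: "Tk (Suc k) x = V_zero" and gx: "g x = V_zero"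
      have "Tk k (actV TT x) = V_zero" using h by (simp add: funpow_Suc_right del: funpow.simps)
      moreover have "g (actV TT x) = V_zero" using gT[OF xV] gx by (simp add: actV_V_zero)
      moreover have "actV TT x \<in> VC" by simp
      ultimately have "actV TT x = V_zero" using Suc.IH by blast
      hence "x \<in> socV" using T_kill_soc[OF xV] by simp
      thus "x = V_zero" using s gx by blast
    qed
  qed
  thus ?thesis using x Tk_n[OF x(1)] by blast
qed

lemma injV: assumes g: "homV g" and gT: "\<And>w. w \<in> VC \<Longrightarrow> g (actV TT w) = actV TT (g w)"
  and s: "\<And>z. z \<in> socV \<Longrightarrow> g z = V_zero \<Longrightarrow> z = V_zero"
  shows "inj_on g VC"
proof (rule inj_onI)
  fix x x' assume xx: "x \<in> VC" "x' \<in> VC" "g x = g x'"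
  have ga: "\<And>y z. y \<in> VC \<Longrightarrow> z \<in> VC \<Longrightarrow> g (addV y z) = addV (g y) (g z)"
    using g unfolding homV_def by blast
  have "g (addV x (negV x')) = addV (g x') (negV (g x'))"
    using ga[OF xx(1) negV_in] homV_neg[OF g xx(2)] xx(3) by simp
  also have "\<dots> = V_zero" by (rule addV_neg)
  finally have gd: "g (addV x (negV x')) = V_zero" .
  have "addV x (negV x') = V_zero" by (rule kerV[OF g gT s addV_in gd])
  hence "addV (negV x') x = V_zero" by (simp add: addV_comm)
  hence "x = negV (negV x')" using negV_unique xx(1) by blast
  thus "x = x'" using negV_negV[OF xx(2)] by simp
qed

lemma finite_UC: "finite UC"
proof -
  have "UC \<subseteq> {f. \<forall>x. (x \<in> {..<t} \<longrightarrow> f x \<in> {0..int p ^ n}) \<and> (x \<notin> {..<t} \<longrightarrow> f x = 0)}"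
  proof (intro subsetI CollectI allI conjI impI)
    fix f x assume f: "f \<in> UC"
    { assume "x \<in> {..<t}"
      hence x: "x < t" by simp
      have "int p ^ L x \<le> int p ^ n" using L_le_n[OF x] p_int_gt1 by (intro power_increasing) auto
      thus "f x \<in> {0..int p ^ n}" using f x by (auto simp: memU) }
    { assume "x \<notin> {..<t}" thus "f x = 0" using f by (auto simp: memU) }
  qed
  moreover have "finite {f. \<forall>x. (x \<in> {..<t} \<longrightarrow> f x \<in> {0..int p ^ n}) \<and> (x \<notin> {..<t} \<longrightarrow> f x = (0::int))}"
    by (rule finite_set_of_finite_funs) auto
  ultimately show ?thesis by (rule finite_subset)
qed

lemma finite_VC: "finite VC"
proof -
  define B where "B = {h. \<forall>y. (y \<in> {..<n} \<longrightarrow> h y \<in> {0..int p}) \<and> (y \<notin> {..<n} \<longrightarrow> h y = (0::int))}"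
  have fB: "finite B" unfolding B_def by (rule finite_set_of_finite_funs) auto
  have "VC \<subseteq> {f. \<forall>x. (x \<in> {..<t} \<longrightarrow> f x \<in> B) \<and> (x \<notin> {..<t} \<longrightarrow> f x = (\<lambda>_. 0))}"
  proof (intro subsetI CollectI allI conjI impI)
    fix f x assume f: "f \<in> VC"
    have a: "\<And>i j. i < t \<Longrightarrow> j < L i \<Longrightarrow> 0 \<le> f i j \<and> f i j < int p" and b: "\<And>i j. \<not> (i < t \<and> j < L i) \<Longrightarrow> f i j = 0"
      using f unfolding memV by blast+
    { assume "x \<in> {..<t}"
      hence x: "x < t" by simp
      have "f x y \<in> {0..int p}" for y using a[OF x, of y] b[of x y] p_pos by (cases "y < L x") auto
      moreover have "f x y = 0" if "n \<le> y" for y using b[of x y] L_le_n[OF x] that by simp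
      ultimately show "f x \<in> B" by (auto simp: B_def) }
    { assume "x \<notin> {..<t}" thus "f x = (\<lambda>_. 0)" using b by auto }
  qed
  moreover have "finite {f. \<forall>x. (x \<in> {..<t} \<longrightarrow> f x \<in> B) \<and> (x \<notin> {..<t} \<longrightarrow> f x = (\<lambda>_. 0::int))}"
    by (rule finite_set_of_finite_funs) (auto simp: fB)
  ultimately show ?thesis by (rule finite_subset)
qed

lemma bij_UC: "inj_on f UC \<Longrightarrow> (\<And>x. x \<in> UC \<Longrightarrow> f x \<in> UC) \<Longrightarrow> bij_betw f UC UC"
  using endo_inj_surj[OF finite_UC, of f] by (auto simp: bij_betw_def)
lemma bij_VC: "inj_on f VC \<Longrightarrow> (\<And>x. x \<in> VC \<Longrightarrow> f x \<in> VC) \<Longrightarrow> bij_betw f VC VC"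
  using endo_inj_surj[OF finite_VC, of f] by (auto simp: bij_betw_def)


lemma pow_dvd_cancel: assumes "int p ^ b dvd int p ^ a * X" shows "int p ^ (b - a) dvd X"
proof (cases "b \<le> a")
  case True thus ?thesis by simp
next
  case False
  hence "int p ^ b = int p ^ a * int p ^ (b - a)" by (simp add: power_add[symmetric])
  thus ?thesis using assms by simp
qed

lemma nsmul_eU_pow: assumes i: "i < t" shows "nsmul addU U_zero (p ^ L i) (eU i) = U_zero"
  unfolding nsmulU[OF eU_in[OF i]] by (auto simp: U_zero_def fun_eq_iff eU_def)

lemma lemA:
  assumes m1: "m1 \<in> RS" and m2: "m2 \<in> RS" and f: "struct_iso UC addU {} m1 m2 f"
  shows "\<exists>g. struct_iso VC addV OpsV (PsiR m1) (PsiR m2) g"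
proof -
  note fD = struct_isoD[OF f]
  have fU: "\<And>x. x \<in> UC \<Longrightarrow> f x \<in> UC" by (rule bij_betw_apply[OF fD(1)])
  have hom: "homU f" unfolding homU_def by (intro conjI ballI) (simp_all add: fU fD(2))
  have finj: "inj_on f UC" using fD(1) by (simp add: bij_betw_def)
  define X where "X i j = f (eU i) j" for i j
  define Y where "Y i j l = (if l < L j then (X i j div int p ^ l) mod int p else 0)" for i j l
  have consX: "consU X" unfolding consU_def
  proof (intro allI impI)
    fix i j assume ij: "i < t" "j < t"
    have "f (nsmul addU U_zero (p ^ L i) (eU i)) = U_zero" using nsmul_eU_pow[OF ij(1)] homU_zero[OF hom] by simp
    hence "nsmul addU U_zero (p ^ L i) (f (eU i)) = U_zero" using homU_nsmul[OF hom eU_in[OF ij(1)]] by simp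
    hence "nsmul addU U_zero (p ^ L i) (f (eU i)) j = U_zero j" by simp
    hence "(int (p ^ L i) * X i j) mod int p ^ L j = 0"
      unfolding nsmulU[OF fU[OF eU_in[OF ij(1)]]] using ij by (simp add: U_zero_def X_def)
    hence "(int p ^ L i * X i j) mod int p ^ L j = 0" by (simp add: of_nat_power)
    hence "int p ^ L j dvd int p ^ L i * X i j" by (simp add: mod_eq_0_iff_dvd)
    thus "int p ^ (L j - L i) dvd X i j" by (rule pow_dvd_cancel)
  qed
  have R: "RelXY X Y" unfolding RelXY_def
    using consX fU[OF eU_in] by (auto simp: memU X_def Y_def)
  have consY: "consV Y" by (rule RelXY_consV[OF R])
  define g where "g = ExtV Y"
  have ghom: "homV g" unfolding g_def by (rule ExtV_hom[OF consY])
  have glin: "\<And>c v. g (actV c v) = actV c (g v)" unfolding g_def by (rule ExtV_lin[OF consY])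
  have fdec: "\<And>x. x \<in> UC \<Longrightarrow> f x = ExtU X x" unfolding X_def by (rule homU_decomp[OF hom])
  have gsoc: "\<And>z. z \<in> socU \<Longrightarrow> g (dlt z) = dlt (f z)"
    using S2[OF R] fdec socU_sub unfolding g_def by auto
  have ginj: "inj_on g VC"
  proof (rule injV[OF ghom glin])
    fix w assume w: "w \<in> socV" "g w = V_zero"
    have z: "dlt' w \<in> socU" using w(1) by (rule dlt'_soc)
    have wV: "w \<in> VC" using w(1) socV_sub by auto
    have zU: "dlt' w \<in> UC" using wV by simp
    have "dlt (f (dlt' w)) = V_zero" using gsoc[OF z] w(2) wV by simp
    hence "dlt (f (dlt' w)) = dlt U_zero" by (simp add: dlt_zero)
    hence "f (dlt' w) = U_zero" using dlt_inj[OF fU[OF zU] zeroU_in] by blast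
    hence "f (dlt' w) = f U_zero" using homU_zero[OF hom] by simp
    hence "dlt' w = U_zero" using finj zU by (meson inj_onD zeroU_in)
    hence "dlt (dlt' w) = V_zero" by (simp add: dlt_zero)
    thus "w = V_zero" using wV by simp
  qed
  have gV: "\<And>v. v \<in> VC \<Longrightarrow> g v \<in> VC" using ghom by (simp add: homV_def)
  have gbij: "bij_betw g VC VC" by (rule bij_VC[OF ginj gV])
  have S1': "\<And>v i. v \<in> VC \<Longrightarrow> i < t \<Longrightarrow> dlt' (g v) i mod int p = f (dlt' v) i mod int p"
  proof -
    fix v i assume v: "v \<in> VC" and i: "i < t"
    have "dlt' (g v) i mod int p = g v i 0" using dlt'_mod[OF gV[OF v] i] .
    also have "\<dots> = ExtU X (dlt' v) i mod int p" unfolding g_def by (rule S1[OF R v i])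
    also have "\<dots> = f (dlt' v) i mod int p" using fdec[OF dlt'_in[OF v]] by simp
    finally show "dlt' (g v) i mod int p = f (dlt' v) i mod int p" .
  qed
  have "struct_iso VC addV OpsV (PsiR m1) (PsiR m2) g"
  proof (rule struct_isoI)
    show "bij_betw g VC VC" by (rule gbij)
    show "\<And>x y. x \<in> VC \<Longrightarrow> y \<in> VC \<Longrightarrow> g (addV x y) = addV (g x) (g y)" using ghom by (simp add: homV_def)
    show "\<And>\<phi> x. \<phi> \<in> OpsV \<Longrightarrow> x \<in> VC \<Longrightarrow> g (\<phi> x) = \<phi> (g x)" using glin by (auto elim: OpsV_E)
  next
    fix v w assume vw: "v \<in> VC" "w \<in> VC"
    have a: "m2 (dlt' (g v)) (dlt' (g w)) = m2 (f (dlt' v)) (dlt' (g w))"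
      using vw by (intro RS_R2L[OF m2]) (auto simp: gV fU S1')
    have b: "m2 (f (dlt' v)) (dlt' (g w)) = m2 (f (dlt' v)) (f (dlt' w))"
      using vw by (intro RS_R2R[OF m2]) (auto simp: gV fU S1')
    have "PsiR m2 (g v) (g w) = dlt (f (m1 (dlt' v) (dlt' w)))"
      using a b fD(4) vw by (simp add: PsiR_def)
    also have "\<dots> = g (dlt (m1 (dlt' v) (dlt' w)))" using gsoc RS_soc[OF m1] vw by simp
    finally show "g (PsiR m1 v w) = PsiR m2 (g v) (g w)" by (simp add: PsiR_def)
  qed
  thus ?thesis by blast
qed


lemma Tk_eV: assumes "1 < n" "i < t" shows "Tk (L i) (eV i) = V_zero"
proof (intro ext)
  fix j l show "Tk (L i) (eV i) j l = V_zero j l"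
    using Tk_formula[OF assms(1) eV_in[OF assms(2)], of "L i" j l] by (auto simp: eV_def V_zero_def)
qed

lemma lemB:
  assumes m1: "m1 \<in> RS" and m2: "m2 \<in> RS" and g: "struct_iso VC addV OpsV (PsiR m1) (PsiR m2) g"
  shows "\<exists>f. struct_iso UC addU {} m1 m2 f"
proof -
  note gD = struct_isoD[OF g]
  have gV: "\<And>x. x \<in> VC \<Longrightarrow> g x \<in> VC" by (rule bij_betw_apply[OF gD(1)])
  have ghom: "homV g" unfolding homV_def by (intro conjI ballI) (simp_all add: gV gD(2))
  have ginj: "inj_on g VC" using gD(1) by (simp add: bij_betw_def)
  have glin: "\<And>c w. c \<in> C_car p n \<Longrightarrow> w \<in> VC \<Longrightarrow> g (actV c w) = actV c (g w)"
  proof -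
    fix c w assume "c \<in> C_car p n" "w \<in> VC"
    moreover hence "actV c \<in> OpsV" by (simp add: V_ops_def)
    ultimately show "g (actV c w) = actV c (g w)" using gD(3) by blast
  qed
  have gT: "\<And>w. w \<in> VC \<Longrightarrow> g (actV TT w) = actV TT (g w)" using glin TT_in_C by blast
  define Y where "Y i = g (eV i)" for i
  define X where "X i j = dlt' (g (eV i)) j" for i j
  have consY: "consV Y" unfolding consV_def
  proof (intro allI impI)
    fix i j r assume ij: "i < t" "j < t" and r: "r + L i < L j"
    show "Y i j r = 0"
    proof (cases "1 < n")
      case True
      have "Tk (L i) (g (eV i)) = g (Tk (L i) (eV i))" using g_Tk[of g, OF gT eV_in[OF ij(1)]] by simp
      also have "\<dots> = V_zero" using Tk_eV[OF True ij(1)] homV_zero[OF ghom] by simp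
      finally have "Tk (L i) (g (eV i)) j (r + L i) = 0" by (simp add: V_zero_def)
      thus ?thesis using Tk_formula[OF True gV[OF eV_in[OF ij(1)]], of "L i" j "r + L i"] ij r
        by (simp add: Y_def)
    next
      case False
      thus ?thesis using n_le1 ij r by simp
    qed
  qed
  have consX: "consU X" unfolding consU_def
  proof (intro allI impI)
    fix i j assume ij: "i < t" "j < t"
    have "X i j = (\<Sum>l<L j. Y i j l * int p ^ l)" using ij by (simp add: X_def Y_def dlt'_def)
    also have "int p ^ (L j - L i) dvd \<dots>"
    proof (rule dvd_sum)
      fix l assume "l \<in> {..<L j}"
      show "int p ^ (L j - L i) dvd Y i j l * int p ^ l"
      proof (cases "l + L i < L j")
        case True thus ?thesis using consY ij by (simp add: consV_def)
      next
        case False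
        hence "int p ^ (L j - L i) dvd int p ^ l" by (intro le_imp_power_dvd) simp
        thus ?thesis by simp
      qed
    qed
    finally show "int p ^ (L j - L i) dvd X i j" .
  qed
  have R: "RelXY X Y" unfolding RelXY_def
  proof (intro conjI allI impI)
    show "consU X" by (rule consX)
    fix i j assume ij: "i < t" "j < t"
    have w: "g (eV i) \<in> VC" using gV[OF eV_in[OF ij(1)]] .
    have wU: "dlt' (g (eV i)) \<in> UC" using w by simp
    show "0 \<le> X i j" "X i j < int p ^ L j" using wU ij by (auto simp: memU X_def)
    fix l
    have "Y i j l = dlt (dlt' (g (eV i))) j l" using w by (simp add: Y_def)
    thus "Y i j l = (if l < L j then (X i j div int p ^ l) mod int p else 0)" using ij by (simp add: dlt_def X_def)
  qed
  define f where "f = ExtU X"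
  have fhom: "homU f" unfolding f_def by (rule ExtU_hom[OF consX])
  have fU: "\<And>x. x \<in> UC \<Longrightarrow> f x \<in> UC" by (simp add: f_def)
  have gdec: "\<And>v. v \<in> VC \<Longrightarrow> g v = ExtV Y v" unfolding Y_def by (rule homV_decomp[OF ghom glin])
  have fsoc: "\<And>z. z \<in> socU \<Longrightarrow> dlt (f z) = g (dlt z)"
    using S2[OF R] gdec unfolding f_def by auto
  have finj: "inj_on f UC"
  proof (rule injU[OF fhom])
    fix z assume z: "z \<in> socU" "f z = U_zero"
    have zU: "z \<in> UC" using z(1) socU_sub by auto
    have "g (dlt z) = V_zero" using fsoc[OF z(1)] z(2) by (simp add: dlt_zero)
    hence "g (dlt z) = g V_zero" using homV_zero[OF ghom] by simp
    hence "dlt z = V_zero" using ginj by (meson inj_onD dlt_in zeroV_in)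
    hence "dlt z = dlt U_zero" by (simp add: dlt_zero)
    thus "z = U_zero" using dlt_inj[OF zU zeroU_in] by blast
  qed
  have fbij: "bij_betw f UC UC" by (rule bij_UC[OF finj fU])
  have S1': "\<And>x i. x \<in> UC \<Longrightarrow> i < t \<Longrightarrow> dlt' (g (dlt x)) i mod int p = f x i mod int p"
  proof -
    fix x i assume x: "x \<in> UC" and i: "i < t"
    have "dlt' (g (dlt x)) i mod int p = g (dlt x) i 0" using dlt'_mod[OF gV[OF dlt_in] i] .
    also have "\<dots> = ExtV Y (dlt x) i 0" using gdec[OF dlt_in] by simp
    also have "\<dots> = ExtU X (dlt' (dlt x)) i mod int p" by (rule S1[OF R dlt_in i])
    also have "\<dots> = f x i mod int p" using x by (simp add: f_def)
    finally show "dlt' (g (dlt x)) i mod int p = f x i mod int p" .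
  qed
  have "struct_iso UC addU {} m1 m2 f"
  proof (rule struct_isoI)
    show "bij_betw f UC UC" by (rule fbij)
    show "\<And>x y. x \<in> UC \<Longrightarrow> y \<in> UC \<Longrightarrow> f (addU x y) = addU (f x) (f y)" using fhom by (simp add: homU_def)
    show "\<And>\<phi> x. \<phi> \<in> {} \<Longrightarrow> x \<in> UC \<Longrightarrow> f (\<phi> x) = \<phi> (f x)" by simp
  next
    fix x y assume xy: "x \<in> UC" "y \<in> UC"
    define a b where "a = g (dlt x)" and "b = g (dlt y)"
    have ab: "a \<in> VC" "b \<in> VC" using gV by (auto simp: a_def b_def)
    have e1: "m2 (f x) (f y) = m2 (dlt' a) (f y)"
      using xy ab by (intro RS_R2L[OF m2]) (auto simp: fU S1' a_def)
    have e2: "m2 (dlt' a) (f y) = m2 (dlt' a) (dlt' b)"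
      using xy ab by (intro RS_R2R[OF m2]) (auto simp: fU S1' b_def)
    have "dlt (m2 (f x) (f y)) = PsiR m2 a b" using e1 e2 by (simp add: PsiR_def)
    also have "\<dots> = g (PsiR m1 (dlt x) (dlt y))" using gD(4)[OF dlt_in dlt_in] by (simp add: a_def b_def)
    also have "\<dots> = g (dlt (m1 x y))" using PsiR_dlt[OF m1 xy] by simp
    also have "\<dots> = dlt (f (m1 x y))" using fsoc[OF RS_soc[OF m1 xy]] by simp
    finally have "dlt (m2 (f x) (f y)) = dlt (f (m1 x y))" .
    thus "f (m1 x y) = m2 (f x) (f y)" using dlt_inj RS_in[OF m2] RS_in[OF m1] fU xy by metis
  qed
  thus ?thesis by blast
qed

lemma KEY: assumes "m1 \<in> RS" "m2 \<in> RS"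
  shows "(\<exists>f. struct_iso UC addU {} m1 m2 f) \<longleftrightarrow> (\<exists>g. struct_iso VC addV OpsV (PsiR m1) (PsiR m2) g)"
  using lemA[OF assms] lemB[OF assms] by blast

end


context PL
begin

abbreviation "RR \<equiv> (\<lambda>m m'. \<exists>f. struct_iso UC addU {} m m' f)"
abbreviation "RA \<equiv> (\<lambda>a a'. \<exists>g. struct_iso VC addV OpsV a a' g)"

lemma RR_refl: "RR m m" using iso_agree[of UC m m addU "{}"] by blast
lemma RA_refl: "RA a a" using iso_agree[of VC a a addV OpsV] by blast

lemma RR_sym: assumes "m \<in> RS" "RR m m'" shows "RR m' m"
proof -
  obtain f where f: "struct_iso UC addU {} m m' f" using assms(2) by blast
  have "struct_iso UC addU {} m' m (inv_into UC f)"
    by (rule iso_sym[OF f]) (use RS_in[OF assms(1)] in auto)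
  thus ?thesis by blast
qed

lemma RA_sym: assumes "a \<in> AS" "RA a a'" shows "RA a' a"
proof -
  obtain f where f: "struct_iso VC addV OpsV a a' f" using assms(2) by blast
  have "struct_iso VC addV OpsV a' a (inv_into VC f)"
    by (rule iso_sym[OF f]) (use AS_in[OF assms(1)] in \<open>auto elim: OpsV_E\<close>)
  thus ?thesis by blast
qed

lemma RR_trans: "RR m1 m2 \<Longrightarrow> RR m2 m3 \<Longrightarrow> RR m1 m3"
  using iso_trans by blast
lemma RA_trans: "RA m1 m2 \<Longrightarrow> RA m2 m3 \<Longrightarrow> RA m1 m3"
  using iso_trans by blast

lemma clsR_eq: "m \<in> RS \<Longrightarrow> m' \<in> RS \<Longrightarrow> cls RR RS m = cls RR RS m' \<longleftrightarrow> RR m m'"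
  by (rule cls_eq_iff) (auto intro: RR_refl RR_sym RR_trans)
lemma clsA_eq: "a \<in> AS \<Longrightarrow> a' \<in> AS \<Longrightarrow> cls RA AS a = cls RA AS a' \<longleftrightarrow> RA a a'"
  by (rule cls_eq_iff) (auto intro: RA_refl RA_sym RA_trans)

definition Phi where "Phi X = {a \<in> AS. \<exists>m\<in>X. RA (PsiR m) a}"

lemma Phi_cls: assumes m: "m \<in> RS" shows "Phi (cls RR RS m) = cls RA AS (PsiR m)"
proof
  show "Phi (cls RR RS m) \<subseteq> cls RA AS (PsiR m)"
  proof
    fix a assume "a \<in> Phi (cls RR RS m)"
    then obtain m' where a: "a \<in> AS" "m' \<in> RS" "RR m m'" "RA (PsiR m') a" by (auto simp: Phi_def cls_def)
    have "RA (PsiR m) (PsiR m')" using KEY[OF m a(2)] a(3) by blast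
    hence "RA (PsiR m) a" using a(4) by (rule RA_trans)
    thus "a \<in> cls RA AS (PsiR m)" using a(1) by (simp add: cls_def)
  qed
next
  show "cls RA AS (PsiR m) \<subseteq> Phi (cls RR RS m)"
  proof
    fix a assume "a \<in> cls RA AS (PsiR m)"
    hence "a \<in> AS" "RA (PsiR m) a" by (auto simp: cls_def)
    moreover have "m \<in> cls RR RS m" using m RR_refl by (simp add: cls_def)
    ultimately show "a \<in> Phi (cls RR RS m)" by (auto simp: Phi_def)
  qed
qed

lemma RC_eq: "ring_classes p lam = cls RR RS ` RS"
  by (simp add: ring_classes_def iso_classes_cls)
lemma AC_eq: "alg_classes p n lam = cls RA AS ` AS"
  by (simp add: alg_classes_def iso_classes_cls)

lemma RA_PsiR_PsiA: "a \<in> AS \<Longrightarrow> RA (PsiR (PsiA a)) a"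
  using iso_agree[of VC "PsiR (PsiA a)" a addV OpsV] PsiR_PsiA by blast

lemma cls_alg: assumes "a \<in> AS" shows "cls RA AS a = Phi (cls RR RS (PsiA a))"
proof -
  have "cls RA AS (PsiR (PsiA a)) = cls RA AS a"
    using clsA_eq[OF PsiR_in[OF PsiA_in[OF assms]] assms] RA_PsiR_PsiA[OF assms] by simp
  thus ?thesis using Phi_cls[OF PsiA_in[OF assms]] by simp
qed

lemma main:
  shows "\<exists>\<Phi>. bij_betw \<Phi> (ring_classes p lam) (alg_classes p n lam) \<and>
     \<Phi> ` {X \<in> ring_classes p lam. \<exists>m\<in>X. is_lie (U_car p lam) (U_add p lam) U_zero m}
       = {Y \<in> alg_classes p n lam. \<exists>a\<in>Y. is_lie (V_car p lam) (V_add p lam) V_zero a} \<and>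
     (\<forall>X\<in>ring_classes p lam. \<forall>m\<in>X. \<forall>a\<in>\<Phi> X.
        is_lie (U_car p lam) (U_add p lam) U_zero m \<longrightarrow>
        is_lie (V_car p lam) (V_add p lam) V_zero a \<longrightarrow>
        (nilpotent_alg (U_car p lam) (U_add p lam) U_zero (U_neg p lam) {} m \<longleftrightarrow>
         nilpotent_alg (V_car p lam) (V_add p lam) V_zero (V_neg p lam) (V_ops p n lam) a))"
proof (intro exI[of _ Phi] conjI)
  show "bij_betw Phi (ring_classes p lam) (alg_classes p n lam)"
    unfolding bij_betw_def
  proof
    show "inj_on Phi (ring_classes p lam)"
    proof (rule inj_onI)
      fix X Y assume "X \<in> ring_classes p lam" "Y \<in> ring_classes p lam" and e: "Phi X = Phi Y"
      then obtain m1 m2 where m: "m1 \<in> RS" "m2 \<in> RS" "X = cls RR RS m1" "Y = cls RR RS m2" by (auto simp: RC_eq)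
      have "cls RA AS (PsiR m1) = cls RA AS (PsiR m2)" using e m Phi_cls by simp
      hence "RA (PsiR m1) (PsiR m2)" using clsA_eq PsiR_in m by blast
      hence "RR m1 m2" using KEY[OF m(1,2)] by blast
      thus "X = Y" using clsR_eq m by blast
    qed
  next
    show "Phi ` ring_classes p lam = alg_classes p n lam"
    proof
      show "Phi ` ring_classes p lam \<subseteq> alg_classes p n lam"
        using Phi_cls PsiR_in by (auto simp: RC_eq AC_eq)
      show "alg_classes p n lam \<subseteq> Phi ` ring_classes p lam"
      proof
        fix Y assume "Y \<in> alg_classes p n lam"
        then obtain a where a: "a \<in> AS" "Y = cls RA AS a" by (auto simp: AC_eq)
        thus "Y \<in> Phi ` ring_classes p lam" using cls_alg[OF a(1)] PsiA_in[OF a(1)] by (auto simp: RC_eq)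
      qed
    qed
  qed
next
  show "Phi ` {X \<in> ring_classes p lam. \<exists>m\<in>X. is_lie UC addU U_zero m}
       = {Y \<in> alg_classes p n lam. \<exists>a\<in>Y. is_lie VC addV V_zero a}"
  proof
    show "Phi ` {X \<in> ring_classes p lam. \<exists>m\<in>X. is_lie UC addU U_zero m}
       \<subseteq> {Y \<in> alg_classes p n lam. \<exists>a\<in>Y. is_lie VC addV V_zero a}"
    proof
      fix Y assume "Y \<in> Phi ` {X \<in> ring_classes p lam. \<exists>m\<in>X. is_lie UC addU U_zero m}"
      then obtain X m where X: "X \<in> ring_classes p lam" "m \<in> X" "is_lie UC addU U_zero m" "Y = Phi X" by blast
      then obtain m0 where m0: "m0 \<in> RS" "X = cls RR RS m0" by (auto simp: RC_eq)
      have mRS: "m \<in> RS" using X(2) m0 by (simp add: cls_def)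
      have "Y \<in> alg_classes p n lam" using X(4) m0 Phi_cls PsiR_in by (auto simp: AC_eq)
      moreover have "PsiR m \<in> Y"
      proof -
        have "RA (PsiR m) (PsiR m)" by (rule RA_refl)
        thus ?thesis using X(2,4) PsiR_in[OF mRS] unfolding Phi_def by blast
      qed
      moreover have "is_lie VC addV V_zero (PsiR m)" by (rule PsiR_lie[OF mRS X(3)])
      ultimately show "Y \<in> {Y \<in> alg_classes p n lam. \<exists>a\<in>Y. is_lie VC addV V_zero a}" by blast
    qed
  next
    show "{Y \<in> alg_classes p n lam. \<exists>a\<in>Y. is_lie VC addV V_zero a}
       \<subseteq> Phi ` {X \<in> ring_classes p lam. \<exists>m\<in>X. is_lie UC addU U_zero m}"
    proof
      fix Y assume "Y \<in> {Y \<in> alg_classes p n lam. \<exists>a\<in>Y. is_lie VC addV V_zero a}"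
      then obtain a where Y: "Y \<in> alg_classes p n lam" "a \<in> Y" "is_lie VC addV V_zero a" by blast
      then obtain a0 where a0: "a0 \<in> AS" "Y = cls RA AS a0" by (auto simp: AC_eq)
      have aAS: "a \<in> AS" "RA a0 a" using Y(2) a0 by (auto simp: cls_def)
      have Yeq: "Y = cls RA AS a" using a0 aAS clsA_eq by blast
      define X where "X = cls RR RS (PsiA a)"
      have "X \<in> ring_classes p lam" using PsiA_in[OF aAS(1)] by (simp add: X_def RC_eq)
      moreover have "PsiA a \<in> X" using PsiA_in[OF aAS(1)] RR_refl by (simp add: X_def cls_def)
      moreover have "is_lie UC addU U_zero (PsiA a)" by (rule PsiA_lie[OF aAS(1) Y(3)])
      moreover have "Phi X = Y" using cls_alg[OF aAS(1)] Yeq by (simp add: X_def)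
      ultimately show "Y \<in> Phi ` {X \<in> ring_classes p lam. \<exists>m\<in>X. is_lie UC addU U_zero m}" by blast
    qed
  qed
next
  show "\<forall>X\<in>ring_classes p lam. \<forall>m\<in>X. \<forall>a\<in>Phi X.
        is_lie UC addU U_zero m \<longrightarrow> is_lie VC addV V_zero a \<longrightarrow>
        (nilpotent_alg UC addU U_zero negU {} m \<longleftrightarrow> nilpotent_alg VC addV V_zero negV OpsV a)"
  proof (intro ballI impI)
    fix X m a assume X: "X \<in> ring_classes p lam" and m: "m \<in> X" and a: "a \<in> Phi X"
    obtain m0 where m0: "m0 \<in> RS" "X = cls RR RS m0" using X by (auto simp: RC_eq)
    have mRS: "m \<in> RS" and mm0: "RR m0 m" using m m0 by (auto simp: cls_def)
    obtain m' where m': "a \<in> AS" "m' \<in> X" "RA (PsiR m') a" using a by (auto simp: Phi_def)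
    have m'RS: "m' \<in> RS" and m0m': "RR m0 m'" using m'(2) m0 by (auto simp: cls_def)
    obtain f1 where f1: "struct_iso UC addU {} m0 m f1" using mm0 by blast
    obtain f2 where f2: "struct_iso UC addU {} m0 m' f2" using m0m' by blast
    obtain g where g: "struct_iso VC addV OpsV (PsiR m') a g" using m'(3) by blast
    have "nilpotent_alg UC addU U_zero negU {} m \<longleftrightarrow> nilpotent_alg UC addU U_zero negU {} m0"
      using isoU_nilp[OF f1 m0(1) mRS] by simp
    also have "\<dots> \<longleftrightarrow> nilpotent_alg UC addU U_zero negU {} m'"
      using isoU_nilp[OF f2 m0(1) m'RS] by simp
    also have "\<dots> \<longleftrightarrow> nilpotent_alg VC addV V_zero negV OpsV (PsiR m')"
      by (rule PsiR_nilp[OF m'RS])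
    also have "\<dots> \<longleftrightarrow> nilpotent_alg VC addV V_zero negV OpsV a"
      by (rule isoV_nilp[OF g PsiR_in[OF m'RS] m'(1)])
    finally show "nilpotent_alg UC addU U_zero negU {} m \<longleftrightarrow> nilpotent_alg VC addV V_zero negV OpsV a" .
  qed
qed

end

theorem theorem2p1:
  fixes p n :: nat and lam :: "nat list"
  assumes "prime p" and "is_partition lam n"
  shows "\<exists>\<Phi>. bij_betw \<Phi> (ring_classes p lam) (alg_classes p n lam) \<and>
     \<Phi> ` {X \<in> ring_classes p lam. \<exists>m\<in>X. is_lie (U_car p lam) (U_add p lam) U_zero m}
       = {Y \<in> alg_classes p n lam. \<exists>a\<in>Y. is_lie (V_car p lam) (V_add p lam) V_zero a} \<and>
     (\<forall>X\<in>ring_classes p lam. \<forall>m\<in>X. \<forall>a\<in>\<Phi> X.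
        is_lie (U_car p lam) (U_add p lam) U_zero m \<longrightarrow>
        is_lie (V_car p lam) (V_add p lam) V_zero a \<longrightarrow>
        (nilpotent_alg (U_car p lam) (U_add p lam) U_zero (U_neg p lam) {} m \<longleftrightarrow>
         nilpotent_alg (V_car p lam) (V_add p lam) V_zero (V_neg p lam) (V_ops p n lam) a))"
proof -
  interpret PL p n lam using assms by unfold_locales
  show ?thesis by (rule main)
qed


end
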